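(* Let $n\ge 3$ be an odd integer and $(\mathcal{C},\Sigma)$ an $n$-angulated category. For objects $A,B$ of $\mathcal{C}$ the following are equivalent: (1) $[A]=[B]$ in $K_0(\mathcal{C})$; (2) there exist objects $C_1,\dots,C_n$ and two $n$-angles $A\oplus C_1\xrightarrow{\alpha_1}C_2\xrightarrow{\alpha_2}\cdots\xrightarrow{\alpha_{n-1}}C_n\xrightarrow{\alpha_n}\Sigma A\oplus\Sigma C_1$ and $B\oplus C_1\xrightarrow{\beta_1}C_2\xrightarrow{\beta_2}\cdots\xrightarrow{\beta_{n-1}}C_n\xrightarrow{\beta_n}\Sigma B\oplus\Sigma C_1$ in $\mathcal{C}$.
   Context: All categories are small. Fix an integer $n\ge 3$. Let $\mathcal{C}$ be an additive category with an automorphism $\Sigma$. An $n$-$\Sigma$-sequence in $\mathcal{C}$ is a diagram $A_1\xrightarrow{\alpha_1}A_2\xrightarrow{\alpha_2}\cdots\xrightarrow{\alpha_{n-1}}A_n\xrightarrow{\alpha_n}\Sigma A_1$. Its left rotation is $A_2\xrightarrow{\alpha_2}\cdots\xrightarrow{\alpha_n}\Sigma A_1\xrightarrow{(-1)^n\Sigma\alpha_1}\Sigma A_2$. A morphism from $(A_\bullet,\alpha)$ to $(B_\bullet,\beta)$ is a tuple $(\varphi_1,\dots,\varphi_n)$, $\varphi_i:A_i\to B_i$, with $\beta_i\varphi_i=\varphi_{i+1}\alpha_i$ for $1\le i\le n-1$ and $\beta_n\varphi_n=(\Sigma\varphi_1)\alpha_n$; it is an isomorphism if all $\varphi_i$ are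 isomorphisms. Direct sums of sequences are taken termwise. $(\mathcal{C},\Sigma)$ is $n$-angulated if it is equipped with a collection $\mathscr N$ of $n$-$\Sigma$-sequences, called $n$-angles, such that: (N1)(a) $\mathscr N$ is closed under direct sums, direct summands and isomorphisms of $n$-$\Sigma$-sequences; (b) for every object $A$, the trivial sequence $A\xrightarrow{1}A\to0\to\cdots\to0\to\Sigma A$ is in $\mathscr N$; (c) every morphism $A_1\to A_2$ is the first morphism of some $n$-angle; (N2) an $n$-$\Sigma$-sequence is in $\mathscr N$ iff its left rotation is; (N3) given $n$-angles $(A_\bullet,\alpha),(B_\bullet,\beta)$ and $\varphi_1:A_1\to B_1$, $\varphi_2:A_2\to B_2$ with $\beta_1\varphi_1=\varphi_2\alpha_1$, there exist $\varphi_3,\dots,\varphi_n$ making $(\varphi_1,\dots,\varphi_n)$ a morphism; (N4) in (N3) the $\varphi_i$ can be chosen so that the mapping cone $A_2\oplus B_1\to A_3\oplus B_2\to\cdots\to\Sigma A_1\oplus B_n\to\Sigma A_2\oplus\Sigma B_1$, with maps $\left[\begin{smallmatrix}-\alpha_{i+1}&0\\ \varphi_{i+1}&\beta_i\end{smallmatrix}\right]$ ($1\le i\le n-1$) and last map $\left[\begin{smallmatrix}-\Sigma\alpha_1&0\\ \Sigma\varphi_1&\beta_n\end{smallmatrix}\right]$, is an $n$-angle. Grothendieck group: let $F(\mathcal{C})$ be the free abelian group on the isomorphism classes $\langle A\rangle$ of objects of $\mathcal{C}$. For an $n$-angle $A_\bullet$ put $\chi(A_\bullet)=\sum_{i=1}^n(-1)^{i+1}\langle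 A_i\rangle$. Let $R(\mathcal{C})$ be the subgroup generated by all $\chi(A_\bullet)$ ($A_\bullet$ an $n$-angle), together with $\langle 0\rangle$ when $n$ is even. Then $K_0(\mathcal{C})=F(\mathcal{C})/R(\mathcal{C})$, and $[A]$ denotes the class of $\langle A\rangle$. *)

theory Defs
  imports Main
begin

text \<open>A (small) category with explicit object and morphism sets; cmp g f is the
composite of f followed by g.  madd, mzero, mneg give the abelian group
structure on the Hom sets.\<close>

record ('o,'m) addcat =
  Obj   :: "'o set"
  Mor   :: "'m set"
  cdom  :: "'m \<Rightarrow> 'o"
  ccod  :: "'m \<Rightarrow> 'o"
  cmp   :: "'m \<Rightarrow> 'm \<Rightarrow> 'm"
  idm   :: "'o \<Rightarrow> 'm"
  madd  :: "'m \<Rightarrow> 'm \<Rightarrow> 'm"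
  mzero :: "'o \<Rightarrow> 'o \<Rightarrow> 'm"
  mneg  :: "'m \<Rightarrow> 'm"

definition Hom :: "('o,'m) addcat \<Rightarrow> 'o \<Rightarrow> 'o \<Rightarrow> 'm set" where
  "Hom C A B = {f \<in> Mor C. cdom C f = A \<and> ccod C f = B}"

type_synonym ('o,'m) bp = "'o \<times> 'm \<times> 'm \<times> 'm \<times> 'm"

definition is_biprod :: "('o,'m) addcat \<Rightarrow> 'o \<Rightarrow> 'o \<Rightarrow> ('o,'m) bp \<Rightarrow> bool" where
  "is_biprod C X Y D = (case D of (S, i1, i2, p1, p2) \<Rightarrow>
     X \<in> Obj C \<and> Y \<in> Obj C \<and> S \<in> Obj C \<and>
     i1 \<in> Hom C X S \<and> i2 \<in> Hom C Y S \<and> p1 \<in> Hom C S X \<and> p2 \<in> Hom C S Y \<and>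
     cmp C p1 i1 = idm C X \<and> cmp C p2 i2 = idm C Y \<and>
     cmp C p1 i2 = mzero C Y X \<and> cmp C p2 i1 = mzero C X Y \<and>
     madd C (cmp C i1 p1) (cmp C i2 p2) = idm C S)"

definition is_zero_obj :: "('o,'m) addcat \<Rightarrow> 'o \<Rightarrow> bool" where
  "is_zero_obj C Z = (Z \<in> Obj C \<and> idm C Z = mzero C Z Z)"

definition additive_category :: "('o,'m) addcat \<Rightarrow> bool" where
  "additive_category C = (
     (\<forall>f \<in> Mor C. cdom C f \<in> Obj C \<and> ccod C f \<in> Obj C) \<and>
     (\<forall>A \<in> Obj C. idm C A \<in> Hom C A A) \<and>
     (\<forall>A B D f g. f \<in> Hom C A B \<longrightarrow> g \<in> Hom C B D \<longrightarrow> cmp C g f \<in> Hom C A D) \<and>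
     (\<forall>A B D E f g h. f \<in> Hom C A B \<longrightarrow> g \<in> Hom C B D \<longrightarrow> h \<in> Hom C D E \<longrightarrow>
        cmp C h (cmp C g f) = cmp C (cmp C h g) f) \<and>
     (\<forall>A B f. f \<in> Hom C A B \<longrightarrow> cmp C f (idm C A) = f \<and> cmp C (idm C B) f = f) \<and>
     (\<forall>A \<in> Obj C. \<forall>B \<in> Obj C. mzero C A B \<in> Hom C A B) \<and>
     (\<forall>A B f g. f \<in> Hom C A B \<longrightarrow> g \<in> Hom C A B \<longrightarrow> madd C f g \<in> Hom C A B) \<and>
     (\<forall>A B f. f \<in> Hom C A B \<longrightarrow> mneg C f \<in> Hom C A B) \<and>
     (\<forall>A B f g h. f \<in> Hom C A B \<longrightarrow> g \<in> Hom C A B \<longrightarrow> h \<in> Hom C A B \<longrightarrow>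
        madd C (madd C f g) h = madd C f (madd C g h)) \<and>
     (\<forall>A B f g. f \<in> Hom C A B \<longrightarrow> g \<in> Hom C A B \<longrightarrow> madd C f g = madd C g f) \<and>
     (\<forall>A B f. f \<in> Hom C A B \<longrightarrow> madd C f (mzero C A B) = f) \<and>
     (\<forall>A B f. f \<in> Hom C A B \<longrightarrow> madd C f (mneg C f) = mzero C A B) \<and>
     (\<forall>A B D f f' g. f \<in> Hom C A B \<longrightarrow> f' \<in> Hom C A B \<longrightarrow> g \<in> Hom C B D \<longrightarrow>
        cmp C g (madd C f f') = madd C (cmp C g f) (cmp C g f')) \<and>
     (\<forall>A B D f g g'. f \<in> Hom C A B \<longrightarrow> g \<in> Hom C B D \<longrightarrow> g' \<in> Hom C B D \<longrightarrow>
        cmp C (madd C g g') f = madd C (cmp C g f) (cmp C g' f)) \<and>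
     (\<exists>Z. is_zero_obj C Z) \<and>
     (\<forall>X \<in> Obj C. \<forall>Y \<in> Obj C. \<exists>D. is_biprod C X Y D))"

definition is_automorphism :: "('o,'m) addcat \<Rightarrow> ('o \<Rightarrow> 'o) \<Rightarrow> ('m \<Rightarrow> 'm) \<Rightarrow> bool" where
  "is_automorphism C SO SM = (
     bij_betw SO (Obj C) (Obj C) \<and> bij_betw SM (Mor C) (Mor C) \<and>
     (\<forall>A B f. f \<in> Hom C A B \<longrightarrow> SM f \<in> Hom C (SO A) (SO B)) \<and>
     (\<forall>A B D f g. f \<in> Hom C A B \<longrightarrow> g \<in> Hom C B D \<longrightarrow> SM (cmp C g f) = cmp C (SM g) (SM f)) \<and>
     (\<forall>A \<in> Obj C. SM (idm C A) = idm C (SO A)) \<and>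
     (\<forall>A B f g. f \<in> Hom C A B \<longrightarrow> g \<in> Hom C A B \<longrightarrow> SM (madd C f g) = madd C (SM f) (SM g)))"

definition is_iso :: "('o,'m) addcat \<Rightarrow> 'm \<Rightarrow> bool" where
  "is_iso C f = (f \<in> Mor C \<and> (\<exists>g \<in> Hom C (ccod C f) (cdom C f).
     cmp C g f = idm C (cdom C f) \<and> cmp C f g = idm C (ccod C f)))"

definition iso_obj :: "('o,'m) addcat \<Rightarrow> 'o \<Rightarrow> 'o \<Rightarrow> bool" where
  "iso_obj C A B = (\<exists>f \<in> Hom C A B. is_iso C f)"

section \<open>n-Sigma-sequences (0-indexed lists: A_1..A_n is As!0..As!(n-1))\<close>

definition nseq :: "('o,'m) addcat \<Rightarrow> ('o \<Rightarrow> 'o) \<Rightarrow> nat \<Rightarrow> 'o list \<Rightarrow> 'm list \<Rightarrow> bool" where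
  "nseq C SO n As fs = (length As = n \<and> length fs = n \<and>
     (\<forall>i < n - 1. fs ! i \<in> Hom C (As ! i) (As ! Suc i)) \<and>
     fs ! (n - 1) \<in> Hom C (As ! (n - 1)) (SO (As ! 0)))"

definition rotl :: "('o,'m) addcat \<Rightarrow> ('o \<Rightarrow> 'o) \<Rightarrow> ('m \<Rightarrow> 'm) \<Rightarrow> nat
    \<Rightarrow> 'o list \<times> 'm list \<Rightarrow> 'o list \<times> 'm list" where
  "rotl C SO SM n X = (case X of (As, fs) \<Rightarrow>
     (tl As @ [SO (hd As)],
      tl fs @ [if even n then SM (hd fs) else mneg C (SM (hd fs))]))"

definition seq_mor :: "('o,'m) addcat \<Rightarrow> ('m \<Rightarrow> 'm) \<Rightarrow> nat
    \<Rightarrow> 'o list \<times> 'm list \<Rightarrow> 'o list \<times> 'm list \<Rightarrow> 'm list \<Rightarrow> bool" where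
  "seq_mor C SM n X Y ph = (case X of (As, fs) \<Rightarrow> case Y of (Bs, gs) \<Rightarrow>
     length ph = n \<and>
     (\<forall>i < n. ph ! i \<in> Hom C (As ! i) (Bs ! i)) \<and>
     (\<forall>i < n - 1. cmp C (gs ! i) (ph ! i) = cmp C (ph ! Suc i) (fs ! i)) \<and>
     cmp C (gs ! (n - 1)) (ph ! (n - 1)) = cmp C (SM (ph ! 0)) (fs ! (n - 1)))"

definition seq_iso :: "('o,'m) addcat \<Rightarrow> ('m \<Rightarrow> 'm) \<Rightarrow> nat
    \<Rightarrow> 'o list \<times> 'm list \<Rightarrow> 'o list \<times> 'm list \<Rightarrow> bool" where
  "seq_iso C SM n X Y = (\<exists>ph. seq_mor C SM n X Y ph \<and> (\<forall>i < n. is_iso C (ph ! i)))"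

definition seq_dsum :: "('o,'m) addcat \<Rightarrow> ('m \<Rightarrow> 'm) \<Rightarrow> nat
    \<Rightarrow> 'o list \<times> 'm list \<Rightarrow> 'o list \<times> 'm list \<Rightarrow> 'o list \<times> 'm list \<Rightarrow> bool" where
  "seq_dsum C SM n X Y Z = (\<exists>i1 i2 p1 p2.
     seq_mor C SM n X Z i1 \<and> seq_mor C SM n Y Z i2 \<and>
     seq_mor C SM n Z X p1 \<and> seq_mor C SM n Z Y p2 \<and>
     (\<forall>i < n. is_biprod C (fst X ! i) (fst Y ! i)
                (fst Z ! i, i1 ! i, i2 ! i, p1 ! i, p2 ! i)))"

definition triv_seq :: "('o,'m) addcat \<Rightarrow> ('o \<Rightarrow> 'o) \<Rightarrow> nat \<Rightarrow> 'o \<Rightarrow> 'o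
    \<Rightarrow> 'o list \<times> 'm list" where
  "triv_seq C SO n A Z =
     ([A, A] @ replicate (n - 2) Z,
      [idm C A, mzero C A Z] @ replicate (n - 3) (mzero C Z Z) @ [mzero C Z (SO A)])"

definition sig_bp :: "('o \<Rightarrow> 'o) \<Rightarrow> ('m \<Rightarrow> 'm) \<Rightarrow> ('o,'m) bp \<Rightarrow> ('o,'m) bp" where
  "sig_bp SO SM D = (case D of (S, i1, i2, p1, p2) \<Rightarrow> (SO S, SM i1, SM i2, SM p1, SM p2))"

text \<open>Matrix [[a,b],[c,d]] from the biproduct D to the biproduct E.\<close>
definition mat :: "('o,'m) addcat \<Rightarrow> ('o,'m) bp \<Rightarrow> ('o,'m) bp \<Rightarrow> 'm \<Rightarrow> 'm \<Rightarrow> 'm \<Rightarrow> 'm \<Rightarrow> 'm" where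
  "mat C D E a b c d = (case D of (S, i1, i2, p1, p2) \<Rightarrow> case E of (T, j1, j2, q1, q2) \<Rightarrow>
     madd C (madd C (cmp C j1 (cmp C a p1)) (cmp C j1 (cmp C b p2)))
            (madd C (cmp C j2 (cmp C c p1)) (cmp C j2 (cmp C d p2))))"

text \<open>Extended index: position j < n is the j-th entry, positions n, n+1 are
Sigma applied to entries 0, 1.\<close>
definition ext_obj :: "('o \<Rightarrow> 'o) \<Rightarrow> nat \<Rightarrow> 'o list \<Rightarrow> nat \<Rightarrow> 'o" where
  "ext_obj SO n As j = (if j < n then As ! j else SO (As ! (j - n)))"

definition ext_mor :: "('m \<Rightarrow> 'm) \<Rightarrow> nat \<Rightarrow> 'm list \<Rightarrow> nat \<Rightarrow> 'm" where
  "ext_mor SM n fs j = (if j < n then fs ! j else SM (fs ! (j - n)))"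

definition cone_bps :: "('o,'m) addcat \<Rightarrow> ('o \<Rightarrow> 'o) \<Rightarrow> nat \<Rightarrow> 'o list \<Rightarrow> 'o list
    \<Rightarrow> ('o,'m) bp list \<Rightarrow> bool" where
  "cone_bps C SO n As Bs bps = (length bps = n \<and>
     (\<forall>i < n. is_biprod C (ext_obj SO n As (Suc i)) (Bs ! i) (bps ! i)))"

definition cone :: "('o,'m) addcat \<Rightarrow> ('o \<Rightarrow> 'o) \<Rightarrow> ('m \<Rightarrow> 'm) \<Rightarrow> nat
    \<Rightarrow> 'o list \<times> 'm list \<Rightarrow> 'o list \<times> 'm list \<Rightarrow> 'm list \<Rightarrow> ('o,'m) bp list
    \<Rightarrow> 'o list \<times> 'm list" where
  "cone C SO SM n X Y ph bps = (case X of (As, fs) \<Rightarrow> case Y of (Bs, gs) \<Rightarrow>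
     (let D' = (\<lambda>j. if j < n then bps ! j else sig_bp SO SM (bps ! 0)) in
      (map fst bps,
       map (\<lambda>i. mat C (D' i) (D' (Suc i))
                   (mneg C (ext_mor SM n fs (Suc i)))
                   (mzero C (ext_obj SO n Bs i) (ext_obj SO n As (Suc (Suc i))))
                   (ext_mor SM n ph (Suc i))
                   (gs ! i)) [0..<n])))"

definition n_angulated :: "('o,'m) addcat \<Rightarrow> ('o \<Rightarrow> 'o) \<Rightarrow> ('m \<Rightarrow> 'm) \<Rightarrow> nat
    \<Rightarrow> ('o list \<times> 'm list) set \<Rightarrow> bool" where
  "n_angulated C SO SM n N = (
     3 \<le> n \<and> additive_category C \<and> is_automorphism C SO SM \<and>
     (\<forall>X \<in> N. nseq C SO n (fst X) (snd X)) \<and>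
     \<comment> \<open>N1(a)\<close>
     (\<forall>X Y Z. X \<in> N \<longrightarrow> Y \<in> N \<longrightarrow> nseq C SO n (fst Z) (snd Z) \<longrightarrow>
        seq_dsum C SM n X Y Z \<longrightarrow> Z \<in> N) \<and>
     (\<forall>X Y Z. Z \<in> N \<longrightarrow> nseq C SO n (fst X) (snd X) \<longrightarrow> nseq C SO n (fst Y) (snd Y) \<longrightarrow>
        seq_dsum C SM n X Y Z \<longrightarrow> X \<in> N \<and> Y \<in> N) \<and>
     (\<forall>X Y. X \<in> N \<longrightarrow> nseq C SO n (fst Y) (snd Y) \<longrightarrow> seq_iso C SM n X Y \<longrightarrow> Y \<in> N) \<and>
     \<comment> \<open>N1(b)\<close>
     (\<forall>A \<in> Obj C. \<forall>Z. is_zero_obj C Z \<longrightarrow> triv_seq C SO n A Z \<in> N) \<and>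
     \<comment> \<open>N1(c)\<close>
     (\<forall>A1 A2 f. f \<in> Hom C A1 A2 \<longrightarrow>
        (\<exists>As fs. (As, fs) \<in> N \<and> As ! 0 = A1 \<and> As ! 1 = A2 \<and> fs ! 0 = f)) \<and>
     \<comment> \<open>N2\<close>
     (\<forall>X. nseq C SO n (fst X) (snd X) \<longrightarrow> (X \<in> N \<longleftrightarrow> rotl C SO SM n X \<in> N)) \<and>
     \<comment> \<open>N3\<close>
     (\<forall>As fs Bs gs p1 p2. (As, fs) \<in> N \<longrightarrow> (Bs, gs) \<in> N \<longrightarrow>
        p1 \<in> Hom C (As ! 0) (Bs ! 0) \<longrightarrow> p2 \<in> Hom C (As ! 1) (Bs ! 1) \<longrightarrow>
        cmp C (gs ! 0) p1 = cmp C p2 (fs ! 0) \<longrightarrow>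
        (\<exists>ph. seq_mor C SM n (As, fs) (Bs, gs) ph \<and> ph ! 0 = p1 \<and> ph ! 1 = p2)) \<and>
     \<comment> \<open>N4\<close>
     (\<forall>As fs Bs gs p1 p2. (As, fs) \<in> N \<longrightarrow> (Bs, gs) \<in> N \<longrightarrow>
        p1 \<in> Hom C (As ! 0) (Bs ! 0) \<longrightarrow> p2 \<in> Hom C (As ! 1) (Bs ! 1) \<longrightarrow>
        cmp C (gs ! 0) p1 = cmp C p2 (fs ! 0) \<longrightarrow>
        (\<exists>ph. seq_mor C SM n (As, fs) (Bs, gs) ph \<and> ph ! 0 = p1 \<and> ph ! 1 = p2 \<and>
           (\<forall>bps. cone_bps C SO n As Bs bps \<longrightarrow>
              cone C SO SM n (As, fs) (Bs, gs) ph bps \<in> N))))"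

definition iso_class :: "('o,'m) addcat \<Rightarrow> 'o \<Rightarrow> 'o set" where
  "iso_class C A = {B \<in> Obj C. iso_obj C A B}"

text \<open>F(C) is realised inside the group of integer-valued functions on
isomorphism classes; gen C A is the basis element of the class of A.\<close>
definition gen :: "('o,'m) addcat \<Rightarrow> 'o \<Rightarrow> 'o set \<Rightarrow> int" where
  "gen C A = (\<lambda>S. if S = iso_class C A then 1 else 0)"

definition chi :: "('o,'m) addcat \<Rightarrow> nat \<Rightarrow> 'o list \<Rightarrow> 'o set \<Rightarrow> int" where
  "chi C n As = (\<lambda>S. \<Sum>i<n. (-1) ^ i * gen C (As ! i) S)"

inductive_set Rgen :: "('o,'m) addcat \<Rightarrow> nat \<Rightarrow> ('o list \<times> 'm list) set
    \<Rightarrow> ('o set \<Rightarrow> int) set"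
  for C n N where
  R_zero: "(\<lambda>S. 0) \<in> Rgen C n N"
| R_chi: "(As, fs) \<in> N \<Longrightarrow> chi C n As \<in> Rgen C n N"
| R_zobj: "even n \<Longrightarrow> is_zero_obj C Z \<Longrightarrow> gen C Z \<in> Rgen C n N"
| R_add: "x \<in> Rgen C n N \<Longrightarrow> y \<in> Rgen C n N \<Longrightarrow> (\<lambda>S. x S + y S) \<in> Rgen C n N"
| R_neg: "x \<in> Rgen C n N \<Longrightarrow> (\<lambda>S. - x S) \<in> Rgen C n N"

text \<open>The class [A] in K_0 = F/R, as the coset of the basis element.\<close>
definition K0class :: "('o,'m) addcat \<Rightarrow> nat \<Rightarrow> ('o list \<times> 'm list) set \<Rightarrow> 'o
    \<Rightarrow> ('o set \<Rightarrow> int) set" where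
  "K0class C n N A = {(\<lambda>S. gen C A S + r S) | r. r \<in> Rgen C n N}"

end

theory Submission
  imports Defs "HOL-Library.Multiset"
begin


locale acat =
  fixes C :: "('o,'m) addcat"
  assumes ac: "additive_category C"
begin

lemmas acs = ac[unfolded additive_category_def]
lemma ac1: "\<forall>f \<in> Mor C. cdom C f \<in> Obj C \<and> ccod C f \<in> Obj C" using acs by (elim conjE)
lemma ac2: "\<forall>A \<in> Obj C. idm C A \<in> Hom C A A" using acs by (elim conjE)
lemma ac3: "\<forall>A B D f g. f \<in> Hom C A B \<longrightarrow> g \<in> Hom C B D \<longrightarrow> cmp C g f \<in> Hom C A D" using acs by (elim conjE)
lemma ac4: "\<forall>A B D E f g h. f \<in> Hom C A B \<longrightarrow> g \<in> Hom C B D \<longrightarrow> h \<in> Hom C D E \<longrightarrow>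
        cmp C h (cmp C g f) = cmp C (cmp C h g) f" using acs by (elim conjE)
lemma ac5: "\<forall>A B f. f \<in> Hom C A B \<longrightarrow> cmp C f (idm C A) = f \<and> cmp C (idm C B) f = f" using acs by (elim conjE)
lemma ac6: "\<forall>A \<in> Obj C. \<forall>B \<in> Obj C. mzero C A B \<in> Hom C A B" using acs by (elim conjE)
lemma ac7: "\<forall>A B f g. f \<in> Hom C A B \<longrightarrow> g \<in> Hom C A B \<longrightarrow> madd C f g \<in> Hom C A B" using acs by (elim conjE)
lemma ac8: "\<forall>A B f. f \<in> Hom C A B \<longrightarrow> mneg C f \<in> Hom C A B" using acs by (elim conjE)
lemma ac9: "\<forall>A B f g h. f \<in> Hom C A B \<longrightarrow> g \<in> Hom C A B \<longrightarrow> h \<in> Hom C A B \<longrightarrow>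
        madd C (madd C f g) h = madd C f (madd C g h)" using acs by (elim conjE)
lemma ac10: "\<forall>A B f g. f \<in> Hom C A B \<longrightarrow> g \<in> Hom C A B \<longrightarrow> madd C f g = madd C g f" using acs by (elim conjE)
lemma ac11: "\<forall>A B f. f \<in> Hom C A B \<longrightarrow> madd C f (mzero C A B) = f" using acs by (elim conjE)
lemma ac12: "\<forall>A B f. f \<in> Hom C A B \<longrightarrow> madd C f (mneg C f) = mzero C A B" using acs by (elim conjE)
lemma ac13: "\<forall>A B D f f' g. f \<in> Hom C A B \<longrightarrow> f' \<in> Hom C A B \<longrightarrow> g \<in> Hom C B D \<longrightarrow>
        cmp C g (madd C f f') = madd C (cmp C g f) (cmp C g f')" using acs by (elim conjE)
lemma ac14: "\<forall>A B D f g g'. f \<in> Hom C A B \<longrightarrow> g \<in> Hom C B D \<longrightarrow> g' \<in> Hom C B D \<longrightarrow>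
        cmp C (madd C g g') f = madd C (cmp C g f) (cmp C g' f)" using acs by (elim conjE)
lemma ac15: "\<exists>Z. is_zero_obj C Z" using acs by (elim conjE)
lemma ac16: "\<forall>X \<in> Obj C. \<forall>Y \<in> Obj C. \<exists>D. is_biprod C X Y D" using acs by (elim conjE)

lemma Hom_iff: "f \<in> Hom C A B \<longleftrightarrow> f \<in> Mor C \<and> cdom C f = A \<and> ccod C f = B"
  by (simp add: Hom_def)

lemma mor_obj[simp]: "f \<in> Mor C \<Longrightarrow> cdom C f \<in> Obj C" "f \<in> Mor C \<Longrightarrow> ccod C f \<in> Obj C"
  using ac1 by auto

lemma cmp_typ[simp]:
  assumes "f \<in> Mor C" "g \<in> Mor C" "ccod C f = cdom C g"
  shows "cmp C g f \<in> Mor C" "cdom C (cmp C g f) = cdom C f" "ccod C (cmp C g f) = ccod C g"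
proof -
  have "f \<in> Hom C (cdom C f) (cdom C g)" "g \<in> Hom C (cdom C g) (ccod C g)"
    using assms by (auto simp: Hom_iff)
  then have "cmp C g f \<in> Hom C (cdom C f) (ccod C g)"
    using ac3 by blast
  then show "cmp C g f \<in> Mor C" "cdom C (cmp C g f) = cdom C f" "ccod C (cmp C g f) = ccod C g"
    by (auto simp: Hom_iff)
qed

lemma idm_typ[simp]:
  assumes "A \<in> Obj C"
  shows "idm C A \<in> Mor C" "cdom C (idm C A) = A" "ccod C (idm C A) = A"
  using ac2 assms by (auto simp: Hom_iff)

lemma mzero_typ[simp]:
  assumes "A \<in> Obj C" "B \<in> Obj C"
  shows "mzero C A B \<in> Mor C" "cdom C (mzero C A B) = A" "ccod C (mzero C A B) = B"
  using ac6 assms by (auto simp: Hom_iff)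

lemma madd_typ[simp]:
  assumes "f \<in> Mor C" "g \<in> Mor C" "cdom C f = cdom C g" "ccod C f = ccod C g"
  shows "madd C f g \<in> Mor C" "cdom C (madd C f g) = cdom C f" "ccod C (madd C f g) = ccod C f"
proof -
  have "f \<in> Hom C (cdom C f) (ccod C f)" "g \<in> Hom C (cdom C f) (ccod C f)"
    using assms by (auto simp: Hom_iff)
  then have "madd C f g \<in> Hom C (cdom C f) (ccod C f)"
    using ac7 by blast
  then show "madd C f g \<in> Mor C" "cdom C (madd C f g) = cdom C f" "ccod C (madd C f g) = ccod C f"
    by (auto simp: Hom_iff)
qed

lemma mneg_typ[simp]:
  assumes "f \<in> Mor C"
  shows "mneg C f \<in> Mor C" "cdom C (mneg C f) = cdom C f" "ccod C (mneg C f) = ccod C f"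
proof -
  have "f \<in> Hom C (cdom C f) (ccod C f)" using assms by (auto simp: Hom_iff)
  then have "mneg C f \<in> Hom C (cdom C f) (ccod C f)"
    using ac8 by blast
  then show "mneg C f \<in> Mor C" "cdom C (mneg C f) = cdom C f" "ccod C (mneg C f) = ccod C f"
    by (auto simp: Hom_iff)
qed

lemma cmp_assoc:
  assumes "f \<in> Mor C" "g \<in> Mor C" "h \<in> Mor C" "ccod C f = cdom C g" "ccod C g = cdom C h"
  shows "cmp C (cmp C h g) f = cmp C h (cmp C g f)"
proof -
  have "f \<in> Hom C (cdom C f) (cdom C g)" "g \<in> Hom C (cdom C g) (cdom C h)" "h \<in> Hom C (cdom C h) (ccod C h)"
    using assms by (auto simp: Hom_iff)
  then show ?thesis using ac4 by metis
qed

lemma cmp_id_r[simp]: "f \<in> Mor C \<Longrightarrow> A = cdom C f \<Longrightarrow> cmp C f (idm C A) = f"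
  using ac5 by (auto simp: Hom_iff)
lemma cmp_id_l[simp]: "f \<in> Mor C \<Longrightarrow> A = ccod C f \<Longrightarrow> cmp C (idm C A) f = f"
  using ac5 by (auto simp: Hom_iff)

lemma add_assoc:
  assumes "f \<in> Mor C" "g \<in> Mor C" "h \<in> Mor C" "cdom C f = cdom C g" "ccod C f = ccod C g"
     "cdom C f = cdom C h" "ccod C f = ccod C h"
  shows "madd C (madd C f g) h = madd C f (madd C g h)"
proof -
  have "f \<in> Hom C (cdom C f) (ccod C f)" "g \<in> Hom C (cdom C f) (ccod C f)" "h \<in> Hom C (cdom C f) (ccod C f)"
    using assms by (auto simp: Hom_iff)
  then show ?thesis using ac9 by metis
qed

lemma add_comm:
  assumes "f \<in> Mor C" "g \<in> Mor C" "cdom C f = cdom C g" "ccod C f = ccod C g"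
  shows "madd C f g = madd C g f"
proof -
  have "f \<in> Hom C (cdom C f) (ccod C f)" "g \<in> Hom C (cdom C f) (ccod C f)"
    using assms by (auto simp: Hom_iff)
  then show ?thesis using ac10 by metis
qed

lemma add_zero_r[simp]: "f \<in> Mor C \<Longrightarrow> A = cdom C f \<Longrightarrow> B = ccod C f \<Longrightarrow> madd C f (mzero C A B) = f"
  using ac11 by (auto simp: Hom_iff)

lemma add_zero_l[simp]: "f \<in> Mor C \<Longrightarrow> A = cdom C f \<Longrightarrow> B = ccod C f \<Longrightarrow> madd C (mzero C A B) f = f"
proof -
  assume a: "f \<in> Mor C" "A = cdom C f" "B = ccod C f"
  have "madd C (mzero C A B) f = madd C f (mzero C A B)" by (rule add_comm) (simp_all add: a)
  then show ?thesis using a by simp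
qed

lemma add_neg: "f \<in> Mor C \<Longrightarrow> madd C f (mneg C f) = mzero C (cdom C f) (ccod C f)"
  using ac12 by (auto simp: Hom_iff)

lemma distr_l:
  assumes "f \<in> Mor C" "g \<in> Mor C" "h \<in> Mor C" "cdom C f = cdom C g" "ccod C f = ccod C g" "ccod C f = cdom C h"
  shows "cmp C h (madd C f g) = madd C (cmp C h f) (cmp C h g)"
proof -
  have "f \<in> Hom C (cdom C f) (ccod C f)" "g \<in> Hom C (cdom C f) (ccod C f)" "h \<in> Hom C (ccod C f) (ccod C h)"
    using assms by (auto simp: Hom_iff)
  then show ?thesis using ac13 by metis
qed

lemma distr_r:
  assumes "f \<in> Mor C" "g \<in> Mor C" "h \<in> Mor C" "cdom C f = cdom C g" "ccod C f = ccod C g" "cdom C f = ccod C h"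
  shows "cmp C (madd C f g) h = madd C (cmp C f h) (cmp C g h)"
proof -
  have "h \<in> Hom C (cdom C h) (cdom C f)" "f \<in> Hom C (cdom C f) (ccod C f)" "g \<in> Hom C (cdom C f) (ccod C f)"
    using assms by (auto simp: Hom_iff)
  then show ?thesis using ac14 by metis
qed

lemma idem_zero:
  assumes "x \<in> Mor C" "madd C x x = x"
  shows "x = mzero C (cdom C x) (ccod C x)"
proof -
  have "x = madd C x (mzero C (cdom C x) (ccod C x))" using assms by simp
  also have "\<dots> = madd C x (madd C x (mneg C x))" by (simp add: add_neg assms)
  also have "\<dots> = madd C (madd C x x) (mneg C x)" by (rule add_assoc[symmetric]) (simp_all add: assms(1))
  also have "\<dots> = mzero C (cdom C x) (ccod C x)" by (simp add: assms add_neg)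
  finally show ?thesis .
qed

lemma zero_add_zero[simp]: "A \<in> Obj C \<Longrightarrow> B \<in> Obj C \<Longrightarrow> madd C (mzero C A B) (mzero C A B) = mzero C A B"
  by simp

lemma cmp_zero_r[simp]:
  assumes "g \<in> Mor C" "B = cdom C g" "A \<in> Obj C"
  shows "cmp C g (mzero C A B) = mzero C A (ccod C g)"
proof -
  have "madd C (cmp C g (mzero C A B)) (cmp C g (mzero C A B)) = cmp C g (mzero C A B)"
    using assms by (simp add: distr_l[symmetric])
  from idem_zero[OF _ this] assms show ?thesis by simp
qed

lemma cmp_zero_l[simp]:
  assumes "f \<in> Mor C" "B = ccod C f" "D \<in> Obj C"
  shows "cmp C (mzero C B D) f = mzero C (cdom C f) D"
proof -
  have "madd C (cmp C (mzero C B D) f) (cmp C (mzero C B D) f) = cmp C (mzero C B D) f"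
    using assms by (simp add: distr_r[symmetric])
  from idem_zero[OF _ this] assms show ?thesis by simp
qed

end


context acat begin

lemma bpD:
  assumes "is_biprod C X Y (S,i1,i2,p1,p2)"
  shows "X \<in> Obj C" "Y \<in> Obj C" "S \<in> Obj C"
    "i1 \<in> Mor C" "cdom C i1 = X" "ccod C i1 = S"
    "i2 \<in> Mor C" "cdom C i2 = Y" "ccod C i2 = S"
    "p1 \<in> Mor C" "cdom C p1 = S" "ccod C p1 = X"
    "p2 \<in> Mor C" "cdom C p2 = S" "ccod C p2 = Y"
    "cmp C p1 i1 = idm C X" "cmp C p2 i2 = idm C Y"
    "cmp C p1 i2 = mzero C Y X" "cmp C p2 i1 = mzero C X Y"
    "madd C (cmp C i1 p1) (cmp C i2 p2) = idm C S"
  using assms unfolding is_biprod_def by (auto simp: Hom_iff)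

lemma cmp_cancel:
  assumes "cmp C g f = h" "f \<in> Mor C" "g \<in> Mor C" "x \<in> Mor C" "ccod C x = cdom C f" "ccod C f = cdom C g"
  shows "cmp C g (cmp C f x) = cmp C h x"
  using assms cmp_assoc by metis

lemma bp_simps:
  assumes "is_biprod C X Y (S,i1,i2,p1,p2)" "x \<in> Mor C"
  shows "ccod C x = X \<Longrightarrow> cmp C p1 (cmp C i1 x) = x"
    "ccod C x = Y \<Longrightarrow> cmp C p2 (cmp C i2 x) = x"
    "ccod C x = Y \<Longrightarrow> cmp C p1 (cmp C i2 x) = mzero C (cdom C x) X"
    "ccod C x = X \<Longrightarrow> cmp C p2 (cmp C i1 x) = mzero C (cdom C x) Y"
  using bpD[OF assms(1)] assms(2)
  by (auto simp: cmp_cancel[where h="idm C X"] cmp_cancel[where h="idm C Y"]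
        cmp_cancel[where h="mzero C Y X"] cmp_cancel[where h="mzero C X Y"])

lemma bp_ext_src:
  assumes bp: "is_biprod C X Y (S,i1,i2,p1,p2)"
    and h: "h \<in> Mor C" "cdom C h = S" and k: "k \<in> Mor C" "cdom C k = S" "ccod C h = ccod C k"
    and e1: "cmp C h i1 = cmp C k i1" and e2: "cmp C h i2 = cmp C k i2"
  shows "h = k"
proof -
  note b = bpD[OF bp]
  have "h = cmp C h (idm C S)" using b h by simp
  also have "\<dots> = cmp C h (madd C (cmp C i1 p1) (cmp C i2 p2))" by (simp only: b(20))
  also have "\<dots> = madd C (cmp C (cmp C h i1) p1) (cmp C (cmp C h i2) p2)"
    using b(1-19) h by (simp add: distr_l cmp_assoc)
  also have "\<dots> = madd C (cmp C (cmp C k i1) p1) (cmp C (cmp C k i2) p2)" by (simp add: e1 e2)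
  also have "\<dots> = cmp C k (madd C (cmp C i1 p1) (cmp C i2 p2))"
    using b(1-19) k by (simp add: distr_l cmp_assoc)
  also have "\<dots> = k" using b k by (simp only: b(20)) simp
  finally show ?thesis .
qed

lemma bp_ext_tgt:
  assumes bp: "is_biprod C X Y (S,i1,i2,p1,p2)"
    and h: "h \<in> Mor C" "ccod C h = S" and k: "k \<in> Mor C" "ccod C k = S" "cdom C h = cdom C k"
    and e1: "cmp C p1 h = cmp C p1 k" and e2: "cmp C p2 h = cmp C p2 k"
  shows "h = k"
proof -
  note b = bpD[OF bp]
  have "h = cmp C (idm C S) h" using b h by simp
  also have "\<dots> = cmp C (madd C (cmp C i1 p1) (cmp C i2 p2)) h" by (simp only: b(20))
  also have "\<dots> = madd C (cmp C i1 (cmp C p1 h)) (cmp C i2 (cmp C p2 h))"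
    using b(1-19) h by (simp add: distr_r cmp_assoc)
  also have "\<dots> = madd C (cmp C i1 (cmp C p1 k)) (cmp C i2 (cmp C p2 k))" by (simp add: e1 e2)
  also have "\<dots> = cmp C (madd C (cmp C i1 p1) (cmp C i2 p2)) k"
    using b(1-19) k by (simp add: distr_r cmp_assoc)
  also have "\<dots> = k" using b k by (simp only: b(20)) simp
  finally show ?thesis .
qed

definition diag :: "'m \<Rightarrow> 'm \<Rightarrow> 'm \<Rightarrow> 'm \<Rightarrow> 'm \<Rightarrow> 'm \<Rightarrow> 'm" where
  "diag j1 j2 p1 p2 f g = madd C (cmp C j1 (cmp C f p1)) (cmp C j2 (cmp C g p2))"

context
  fixes X Y S i1 i2 p1 p2 X' Y' T j1 j2 q1 q2 f g
  assumes D: "is_biprod C X Y (S,i1,i2,p1,p2)" and D': "is_biprod C X' Y' (T,j1,j2,q1,q2)"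
    and f: "f \<in> Mor C" "cdom C f = X" "ccod C f = X'"
    and g: "g \<in> Mor C" "cdom C g = Y" "ccod C g = Y'"
begin

lemma diag_typ: "diag j1 j2 p1 p2 f g \<in> Mor C" "cdom C (diag j1 j2 p1 p2 f g) = S"
   "ccod C (diag j1 j2 p1 p2 f g) = T"
  using bpD[OF D] bpD[OF D'] f g by (auto simp: diag_def)

lemma diag_i1: "cmp C (diag j1 j2 p1 p2 f g) i1 = cmp C j1 f"
  using bpD[OF D] bpD[OF D'] f g bp_simps[OF D]
  by (simp add: diag_def distr_r cmp_assoc)

lemma diag_i2: "cmp C (diag j1 j2 p1 p2 f g) i2 = cmp C j2 g"
  using bpD[OF D] bpD[OF D'] f g bp_simps[OF D]
  by (simp add: diag_def distr_r cmp_assoc)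

lemma diag_p1: "cmp C q1 (diag j1 j2 p1 p2 f g) = cmp C f p1"
  using bpD[OF D] bpD[OF D'] f g bp_simps[OF D']
  by (simp add: diag_def distr_l cmp_assoc)

lemma diag_p2: "cmp C q2 (diag j1 j2 p1 p2 f g) = cmp C g p2"
  using bpD[OF D] bpD[OF D'] f g bp_simps[OF D']
  by (simp add: diag_def distr_l cmp_assoc)

end

lemma diag_comp:
  assumes D: "is_biprod C X Y (S,i1,i2,p1,p2)" and D': "is_biprod C X' Y' (T,j1,j2,q1,q2)"
    and D'': "is_biprod C X'' Y'' (U,k1,k2,r1,r2)"
    and f: "f \<in> Mor C" "cdom C f = X" "ccod C f = X'"
    and g: "g \<in> Mor C" "cdom C g = Y" "ccod C g = Y'"
    and f': "f' \<in> Mor C" "cdom C f' = X'" "ccod C f' = X''"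
    and g': "g' \<in> Mor C" "cdom C g' = Y'" "ccod C g' = Y''"
  shows "cmp C (diag k1 k2 q1 q2 f' g') (diag j1 j2 p1 p2 f g) = diag k1 k2 p1 p2 (cmp C f' f) (cmp C g' g)"
proof -
  note t1 = diag_typ[OF D D' f g] and t2 = diag_typ[OF D' D'' f' g']
  have t3: "diag k1 k2 p1 p2 (cmp C f' f) (cmp C g' g) \<in> Mor C"
     "cdom C (diag k1 k2 p1 p2 (cmp C f' f) (cmp C g' g)) = S"
     "ccod C (diag k1 k2 p1 p2 (cmp C f' f) (cmp C g' g)) = U"
    using diag_typ[OF D D'', of "cmp C f' f" "cmp C g' g"] f g f' g' by auto
  note b = bpD[OF D] bpD[OF D'] bpD[OF D'']
  show ?thesis
  proof (rule bp_ext_src[OF D])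
    show "cmp C (diag k1 k2 q1 q2 f' g') (diag j1 j2 p1 p2 f g) \<in> Mor C"
      "cdom C (cmp C (diag k1 k2 q1 q2 f' g') (diag j1 j2 p1 p2 f g)) = S"
      "ccod C (cmp C (diag k1 k2 q1 q2 f' g') (diag j1 j2 p1 p2 f g)) = ccod C (diag k1 k2 p1 p2 (cmp C f' f) (cmp C g' g))"
      using t1 t2 t3 by auto
    show "diag k1 k2 p1 p2 (cmp C f' f) (cmp C g' g) \<in> Mor C"
      "cdom C (diag k1 k2 p1 p2 (cmp C f' f) (cmp C g' g)) = S" using t3 by auto
    have "cmp C (cmp C (diag k1 k2 q1 q2 f' g') (diag j1 j2 p1 p2 f g)) i1
        = cmp C (diag k1 k2 q1 q2 f' g') (cmp C (diag j1 j2 p1 p2 f g) i1)"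
      using t1 t2 b by (simp add: cmp_assoc)
    also have "\<dots> = cmp C (cmp C (diag k1 k2 q1 q2 f' g') j1) f"
      using t1 t2 b f by (simp add: diag_i1[OF D D' f g] cmp_assoc)
    also have "\<dots> = cmp C k1 (cmp C f' f)"
      using t1 t2 b f f' by (simp add: diag_i1[OF D' D'' f' g'] cmp_assoc)
    also have "\<dots> = cmp C (diag k1 k2 p1 p2 (cmp C f' f) (cmp C g' g)) i1"
      using diag_i1[OF D D'', of "cmp C f' f" "cmp C g' g"] f g f' g' by simp
    finally show "cmp C (cmp C (diag k1 k2 q1 q2 f' g') (diag j1 j2 p1 p2 f g)) i1 = cmp C (diag k1 k2 p1 p2 (cmp C f' f) (cmp C g' g)) i1" .
    have "cmp C (cmp C (diag k1 k2 q1 q2 f' g') (diag j1 j2 p1 p2 f g)) i2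
        = cmp C (diag k1 k2 q1 q2 f' g') (cmp C (diag j1 j2 p1 p2 f g) i2)"
      using t1 t2 b by (simp add: cmp_assoc)
    also have "\<dots> = cmp C (cmp C (diag k1 k2 q1 q2 f' g') j2) g"
      using t1 t2 b g by (simp add: diag_i2[OF D D' f g] cmp_assoc)
    also have "\<dots> = cmp C k2 (cmp C g' g)"
      using t1 t2 b g g' by (simp add: diag_i2[OF D' D'' f' g'] cmp_assoc)
    also have "\<dots> = cmp C (diag k1 k2 p1 p2 (cmp C f' f) (cmp C g' g)) i2"
      using diag_i2[OF D D'', of "cmp C f' f" "cmp C g' g"] f g f' g' by simp
    finally show "cmp C (cmp C (diag k1 k2 q1 q2 f' g') (diag j1 j2 p1 p2 f g)) i2 = cmp C (diag k1 k2 p1 p2 (cmp C f' f) (cmp C g' g)) i2" .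
  qed
qed

lemma diag_id:
  assumes D: "is_biprod C X Y (S,i1,i2,p1,p2)"
  shows "diag i1 i2 p1 p2 (idm C X) (idm C Y) = idm C S"
proof -
  note b = bpD[OF D]
  note t = diag_typ[OF D D, of "idm C X" "idm C Y"]
  show ?thesis
    apply (rule bp_ext_src[OF D])
    using t b apply simp_all
    using diag_i1[OF D D, of "idm C X" "idm C Y"] diag_i2[OF D D, of "idm C X" "idm C Y"] b by simp_all
qed


end

context acat begin
lemma iso_objI:
  assumes "f \<in> Mor C" "cdom C f = A" "ccod C f = B" "g \<in> Mor C" "cdom C g = B" "ccod C g = A"
    "cmp C g f = idm C A" "cmp C f g = idm C B"
  shows "iso_obj C A B"
  using assms unfolding iso_obj_def is_iso_def
  by (intro bexI[of _ f] conjI bexI[of _ g]) (auto simp: Hom_iff)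

lemma iso_objE:
  assumes "iso_obj C A B"
  obtains f g where "f \<in> Mor C" "cdom C f = A" "ccod C f = B" "g \<in> Mor C" "cdom C g = B" "ccod C g = A"
    "cmp C g f = idm C A" "cmp C f g = idm C B"
  using assms unfolding iso_obj_def is_iso_def by (auto simp: Hom_iff)

lemma iso_obj_objs: "iso_obj C A B \<Longrightarrow> A \<in> Obj C \<and> B \<in> Obj C"
  by (erule iso_objE) (metis mor_obj)

lemma iso_obj_refl: "A \<in> Obj C \<Longrightarrow> iso_obj C A A"
  by (rule iso_objI[of "idm C A" _ _ "idm C A"]) auto

lemma iso_obj_sym: "iso_obj C A B \<Longrightarrow> iso_obj C B A"
  by (erule iso_objE) (rule iso_objI, assumption+)

lemma iso_obj_trans:
  assumes "iso_obj C A B" "iso_obj C B D" shows "iso_obj C A D"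
proof -
  obtain f g where f: "f \<in> Mor C" "cdom C f = A" "ccod C f = B" "g \<in> Mor C" "cdom C g = B" "ccod C g = A"
    "cmp C g f = idm C A" "cmp C f g = idm C B" using assms(1) by (rule iso_objE)
  obtain f' g' where f': "f' \<in> Mor C" "cdom C f' = B" "ccod C f' = D" "g' \<in> Mor C" "cdom C g' = D" "ccod C g' = B"
    "cmp C g' f' = idm C B" "cmp C f' g' = idm C D" using assms(2) by (rule iso_objE)
  have o: "A \<in> Obj C" "B \<in> Obj C" "D \<in> Obj C" using f f' by (metis mor_obj)+
  show ?thesis
  proof (rule iso_objI[of "cmp C f' f" _ _ "cmp C g g'"])
    have "cmp C (cmp C g g') (cmp C f' f) = cmp C g (cmp C (cmp C g' f') f)"
      using f(1-6) f'(1-6) by (simp add: cmp_assoc)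
    also have "\<dots> = idm C A" using f f' o by simp
    finally show "cmp C (cmp C g g') (cmp C f' f) = idm C A" .
    have "cmp C (cmp C f' f) (cmp C g g') = cmp C f' (cmp C (cmp C f g) g')"
      using f(1-6) f'(1-6) by (simp add: cmp_assoc)
    also have "\<dots> = idm C D" using f f' o by simp
    finally show "cmp C (cmp C f' f) (cmp C g g') = idm C D" .
  qed (use f f' in auto)
qed

lemma bp_iso:
  assumes D: "is_biprod C X Y (S,i1,i2,p1,p2)" and D': "is_biprod C X' Y' (T,j1,j2,q1,q2)"
    and "iso_obj C X X'" "iso_obj C Y Y'"
  shows "iso_obj C S T"
proof -
  obtain a a' where a: "a \<in> Mor C" "cdom C a = X" "ccod C a = X'" "a' \<in> Mor C" "cdom C a' = X'" "ccod C a' = X"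
    "cmp C a' a = idm C X" "cmp C a a' = idm C X'" using assms(3) by (rule iso_objE)
  obtain b b' where b: "b \<in> Mor C" "cdom C b = Y" "ccod C b = Y'" "b' \<in> Mor C" "cdom C b' = Y'" "ccod C b' = Y"
    "cmp C b' b = idm C Y" "cmp C b b' = idm C Y'" using assms(4) by (rule iso_objE)
  show ?thesis
  proof (rule iso_objI[of "diag j1 j2 p1 p2 a b" _ _ "diag i1 i2 q1 q2 a' b'"])
    show "cmp C (diag i1 i2 q1 q2 a' b') (diag j1 j2 p1 p2 a b) = idm C S"
      using diag_comp[OF D D' D, of a b a' b'] a b diag_id[OF D] by simp
    show "cmp C (diag j1 j2 p1 p2 a b) (diag i1 i2 q1 q2 a' b') = idm C T"
      using diag_comp[OF D' D D', of a' b' a b] a b diag_id[OF D'] by simp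
  qed (use diag_typ[OF D D' a(1-3) b(1-3)] diag_typ[OF D' D a(4-6) b(4-6)] in auto)
qed

lemma bp_swap: assumes D: "is_biprod C X Y (S,i1,i2,p1,p2)" shows "is_biprod C Y X (S,i2,i1,p2,p1)"
proof -
  note b = bpD[OF D]
  have "madd C (cmp C i2 p2) (cmp C i1 p1) = madd C (cmp C i1 p1) (cmp C i2 p2)"
    by (rule add_comm) (use b(1-15) in simp_all)
  then show ?thesis using b unfolding is_biprod_def by (simp add: Hom_iff)
qed

lemma zero_obj_iso: "is_zero_obj C Z \<Longrightarrow> is_zero_obj C Z' \<Longrightarrow> iso_obj C Z Z'"
  unfolding is_zero_obj_def
  by (rule iso_objI[of "mzero C Z Z'" _ _ "mzero C Z' Z"]) auto

lemma bp_zero: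
  assumes D: "is_biprod C X Z (S,i1,i2,p1,p2)" and z: "is_zero_obj C Z"
  shows "iso_obj C S X"
proof -
  note b = bpD[OF D]
  have i2z: "i2 = mzero C Z S"
  proof -
    have "i2 = cmp C i2 (idm C Z)" using b by simp
    also have "\<dots> = cmp C i2 (mzero C Z Z)" using z unfolding is_zero_obj_def by simp
    also have "\<dots> = mzero C Z S" using b by simp
    finally show ?thesis .
  qed
  show ?thesis
  proof (rule iso_objI[of p1 _ _ i1])
    show "cmp C p1 i1 = idm C X" using b by simp
    show "cmp C i1 p1 = idm C S"
    proof (rule bp_ext_src[OF D])
      show "cmp C (cmp C i1 p1) i1 = cmp C (idm C S) i1" using b by (simp add: cmp_assoc)
      show "cmp C (cmp C i1 p1) i2 = cmp C (idm C S) i2" using b by (simp add: cmp_assoc i2z)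
    qed (use b in auto)
  qed (use b in auto)
qed

lemma bp_assoc:
  assumes D1: "is_biprod C X Y (S,i1,i2,p1,p2)" and D2: "is_biprod C S Z (T,j1,j2,q1,q2)"
    and D3: "is_biprod C Y Z (U,k1,k2,r1,r2)"
  shows "is_biprod C X U (T, cmp C j1 i1, diag j1 j2 r1 r2 i2 (idm C Z), cmp C p1 q1, diag k1 k2 q1 q2 p2 (idm C Z))"
proof -
  note b1 = bpD[OF D1] and b2 = bpD[OF D2] and b3 = bpD[OF D3]
  define ui where "ui = diag j1 j2 r1 r2 i2 (idm C Z)"
  define up where "up = diag k1 k2 q1 q2 p2 (idm C Z)"
  have i2t: "i2 \<in> Mor C" "cdom C i2 = Y" "ccod C i2 = S" and p2t: "p2 \<in> Mor C" "cdom C p2 = S" "ccod C p2 = Y"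
    and zt: "idm C Z \<in> Mor C" "cdom C (idm C Z) = Z" "ccod C (idm C Z) = Z" using b1 b2 by auto
  note uit = diag_typ[OF D3 D2 i2t zt, folded ui_def]
  note upt = diag_typ[OF D2 D3 p2t zt, folded up_def]
  have F1: "cmp C q1 ui = cmp C i2 r1" using diag_p1[OF D3 D2 i2t zt] ui_def by simp
  have F2: "cmp C q2 ui = r2" using diag_p2[OF D3 D2 i2t zt] ui_def b3 by simp
  have F3: "cmp C ui k1 = cmp C j1 i2" using diag_i1[OF D3 D2 i2t zt] ui_def by simp
  have F4: "cmp C ui k2 = j2" using diag_i2[OF D3 D2 i2t zt] ui_def b2 by simp
  have F5: "cmp C up j1 = cmp C k1 p2" using diag_i1[OF D2 D3 p2t zt] up_def by simp
  have F6: "cmp C up j2 = k2" using diag_i2[OF D2 D3 p2t zt] up_def b3 by simp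
  have F7: "cmp C r1 up = cmp C p2 q1" using diag_p1[OF D2 D3 p2t zt] up_def by simp
  have F8: "cmp C r2 up = q2" using diag_p2[OF D2 D3 p2t zt] up_def b2 by simp
  have G: "\<And>x. x \<in> Mor C \<Longrightarrow> ccod C x = U \<Longrightarrow> cmp C q1 (cmp C ui x) = cmp C i2 (cmp C r1 x)"
    "\<And>x. x \<in> Mor C \<Longrightarrow> ccod C x = U \<Longrightarrow> cmp C q2 (cmp C ui x) = cmp C r2 x"
    "\<And>x. x \<in> Mor C \<Longrightarrow> ccod C x = Y \<Longrightarrow> cmp C ui (cmp C k1 x) = cmp C j1 (cmp C i2 x)"
    "\<And>x. x \<in> Mor C \<Longrightarrow> ccod C x = Z \<Longrightarrow> cmp C ui (cmp C k2 x) = cmp C j2 x"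
    "\<And>x. x \<in> Mor C \<Longrightarrow> ccod C x = S \<Longrightarrow> cmp C up (cmp C j1 x) = cmp C k1 (cmp C p2 x)"
    "\<And>x. x \<in> Mor C \<Longrightarrow> ccod C x = Z \<Longrightarrow> cmp C up (cmp C j2 x) = cmp C k2 x"
    "\<And>x. x \<in> Mor C \<Longrightarrow> ccod C x = T \<Longrightarrow> cmp C r1 (cmp C up x) = cmp C p2 (cmp C q1 x)"
    "\<And>x. x \<in> Mor C \<Longrightarrow> ccod C x = T \<Longrightarrow> cmp C r2 (cmp C up x) = cmp C q2 x"
    using cmp_cancel[OF F1] cmp_cancel[OF F2] cmp_cancel[OF F3] cmp_cancel[OF F4]
      cmp_cancel[OF F5] cmp_cancel[OF F6] cmp_cancel[OF F7] cmp_cancel[OF F8] uit upt b1(1-15) b2(1-15) b3(1-15)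
    by (simp_all add: cmp_assoc)
  note S = b1(1-15) b2(1-15) b3(1-15) uit upt G F1 F2 F3 F4 F5 F6 F7 F8 bp_simps[OF D1] bp_simps[OF D2] bp_simps[OF D3]
    cmp_assoc distr_l distr_r
  have e1: "cmp C (cmp C p1 q1) (cmp C j1 i1) = idm C X" using S b1(16) by simp
  have e2: "cmp C up ui = idm C U"
    using diag_comp[OF D3 D2 D3 i2t zt p2t zt] b1 b3 diag_id[OF D3] ui_def up_def by simp
  have e3: "cmp C (cmp C p1 q1) ui = mzero C U X" using S b1(18) by simp
  have e4: "cmp C up (cmp C j1 i1) = mzero C X U" using S b1(19) by simp
  have s1: "cmp C (madd C (cmp C (cmp C j1 i1) (cmp C p1 q1)) (cmp C ui up)) (cmp C j1 i1) = cmp C j1 i1"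
    using S b1(16-19) b2(16-19) b3(16-19) by simp
  have s2: "cmp C (madd C (cmp C (cmp C j1 i1) (cmp C p1 q1)) (cmp C ui up)) (cmp C j1 i2) = cmp C j1 i2"
    using S b1(16-19) b2(16-19) b3(16-19) by simp
  have s3: "cmp C (madd C (cmp C (cmp C j1 i1) (cmp C p1 q1)) (cmp C ui up)) j2 = j2"
    using S b1(16-19) b2(16-19) b3(16-19) by simp
  have e5: "madd C (cmp C (cmp C j1 i1) (cmp C p1 q1)) (cmp C ui up) = idm C T"
  proof (rule bp_ext_src[OF D2])
    show "cmp C (madd C (cmp C (cmp C j1 i1) (cmp C p1 q1)) (cmp C ui up)) j1 = cmp C (idm C T) j1"
    proof (rule bp_ext_src[OF D1])
      show "cmp C (cmp C (madd C (cmp C (cmp C j1 i1) (cmp C p1 q1)) (cmp C ui up)) j1) i1 = cmp C (cmp C (idm C T) j1) i1"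
        using s1 S by simp
      show "cmp C (cmp C (madd C (cmp C (cmp C j1 i1) (cmp C p1 q1)) (cmp C ui up)) j1) i2 = cmp C (cmp C (idm C T) j1) i2"
        using s2 S by simp
    qed (use S in simp_all)
    show "cmp C (madd C (cmp C (cmp C j1 i1) (cmp C p1 q1)) (cmp C ui up)) j2 = cmp C (idm C T) j2"
      using s3 S by simp
  qed (use S in simp_all)
  show ?thesis
    unfolding is_biprod_def ui_def[symmetric] up_def[symmetric]
    using e1 e2 e3 e4 e5 b1 b2 b3 uit upt by (simp add: Hom_iff)
qed

end


context acat begin

lemma bp_iso':
  assumes "is_biprod C X Y D" "is_biprod C X' Y' D'" "iso_obj C X X'" "iso_obj C Y Y'"
  shows "iso_obj C (fst D) (fst D')"
proof -
  obtain S i1 i2 p1 p2 where d: "D = (S,i1,i2,p1,p2)" by (cases D) auto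
  obtain T j1 j2 q1 q2 where d': "D' = (T,j1,j2,q1,q2)" by (cases D') auto
  show ?thesis using bp_iso[of X Y S i1 i2 p1 p2 X' Y' T j1 j2 q1 q2] assms d d' by simp
qed

definition Z0 :: 'o where "Z0 = (SOME Z. is_zero_obj C Z)"
definition bp :: "'o \<Rightarrow> 'o \<Rightarrow> ('o,'m) bp" where "bp X Y = (SOME D. is_biprod C X Y D)"

lemma Z0z: "is_zero_obj C Z0"
  unfolding Z0_def by (rule someI_ex) (rule ac15)
lemma Z0: "is_zero_obj C Z0" "Z0 \<in> Obj C"
  using Z0z unfolding is_zero_obj_def by auto

lemma bp_ok: "X \<in> Obj C \<Longrightarrow> Y \<in> Obj C \<Longrightarrow> is_biprod C X Y (bp X Y)"
  unfolding bp_def by (rule someI_ex) (use ac16 in blast)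

lemma bp_fst_obj: "is_biprod C X Y D \<Longrightarrow> fst D \<in> Obj C"
  by (cases D) (auto dest: bpD)

lemma bp_objs: "is_biprod C X Y D \<Longrightarrow> X \<in> Obj C \<and> Y \<in> Obj C"
  by (cases D) (auto dest: bpD)

primrec bsum :: "'o list \<Rightarrow> 'o" where
  "bsum [] = Z0"
| "bsum (x # xs) = fst (bp x (bsum xs))"

lemma bsum_obj: "set xs \<subseteq> Obj C \<Longrightarrow> bsum xs \<in> Obj C"
proof (induction xs)
  case Nil then show ?case using Z0 by simp
next
  case (Cons x xs) then show ?case using bp_fst_obj[OF bp_ok, of x "bsum xs"] by simp
qed

lemma bp_swap': "is_biprod C X Y D \<Longrightarrow> \<exists>D'. is_biprod C Y X D' \<and> fst D' = fst D"
proof -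
  assume a: "is_biprod C X Y D"
  obtain S i1 i2 p1 p2 where "D = (S,i1,i2,p1,p2)" by (cases D) auto
  then show ?thesis using bp_swap a by (intro exI[of _ "(S,i2,i1,p2,p1)"]) auto
qed

lemma bp_zero': "is_biprod C X Z D \<Longrightarrow> is_zero_obj C Z \<Longrightarrow> iso_obj C (fst D) X"
proof -
  assume a: "is_biprod C X Z D" "is_zero_obj C Z"
  obtain S i1 i2 p1 p2 where "D = (S,i1,i2,p1,p2)" by (cases D) auto
  then show ?thesis using bp_zero a by auto
qed

lemma bsum_single: "a \<in> Obj C \<Longrightarrow> iso_obj C (bsum [a]) a"
  using bp_zero'[OF bp_ok Z0(1)] Z0 by simp

lemma bsum_append:
  assumes "set xs \<subseteq> Obj C" "set ys \<subseteq> Obj C" "is_biprod C (bsum xs) (bsum ys) D"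
  shows "iso_obj C (bsum (xs @ ys)) (fst D)"
  using assms
proof (induction xs arbitrary: D)
  case Nil
  obtain D' where D': "is_biprod C (bsum ys) Z0 D'" "fst D' = fst D"
    using bp_swap' Nil(3) by fastforce
  show ?case using bp_zero'[OF D'(1) Z0(1)] D'(2) by (simp add: iso_obj_sym)
next
  case (Cons x xs)
  have o: "x \<in> Obj C" "set xs \<subseteq> Obj C" "bsum xs \<in> Obj C" "bsum ys \<in> Obj C" "bsum (xs @ ys) \<in> Obj C"
    using Cons.prems bsum_obj by auto
  define E where "E = bp (bsum xs) (bsum ys)"
  have E: "is_biprod C (bsum xs) (bsum ys) E" using bp_ok o E_def by simp
  have ih: "iso_obj C (bsum (xs @ ys)) (fst E)" using Cons.IH[OF o(2) Cons.prems(2) E] .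
  have fE: "fst E \<in> Obj C" using bp_fst_obj E .
  have 1: "iso_obj C (bsum ((x # xs) @ ys)) (fst (bp x (fst E)))"
    using bp_iso'[OF bp_ok[OF o(1) o(5)] bp_ok[OF o(1) fE] iso_obj_refl[OF o(1)] ih] by simp
  obtain S i1 i2 p1 p2 where d1: "bp x (bsum xs) = (S,i1,i2,p1,p2)" by (cases "bp x (bsum xs)") auto
  obtain T j1 j2 q1 q2 where d2: "D = (T,j1,j2,q1,q2)" by (cases D) auto
  obtain U k1 k2 r1 r2 where d3: "E = (U,k1,k2,r1,r2)" by (cases E) auto
  have D1: "is_biprod C x (bsum xs) (S,i1,i2,p1,p2)" using bp_ok[OF o(1) o(3)] d1 by simp
  have D2: "is_biprod C S (bsum ys) (T,j1,j2,q1,q2)" using Cons.prems(3) d1 d2 by simp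
  have D3: "is_biprod C (bsum xs) (bsum ys) (U,k1,k2,r1,r2)" using E d3 by simp
  have D4: "is_biprod C x U (T, cmp C j1 i1, diag j1 j2 r1 r2 i2 (idm C (bsum ys)), cmp C p1 q1, diag k1 k2 q1 q2 p2 (idm C (bsum ys)))"
    by (rule bp_assoc[OF D1 D2 D3])
  have U: "U = fst E" using d3 by simp
  have 2: "iso_obj C (fst (bp x (fst E))) (fst D)"
    using bp_iso'[OF bp_ok[OF o(1) fE] D4[unfolded U] iso_obj_refl[OF o(1)] iso_obj_refl[OF fE]] d2 by simp
  show ?case using iso_obj_trans[OF 1 2] .
qed

lemma bsum_comm:
  assumes "set xs \<subseteq> Obj C" "set ys \<subseteq> Obj C"
  shows "iso_obj C (bsum (xs @ ys)) (bsum (ys @ xs))"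
proof -
  have o: "bsum xs \<in> Obj C" "bsum ys \<in> Obj C" using assms bsum_obj by auto
  obtain D' where D': "is_biprod C (bsum ys) (bsum xs) D'" "fst D' = fst (bp (bsum xs) (bsum ys))"
    using bp_swap'[OF bp_ok[OF o]] by auto
  show ?thesis
    using bsum_append[OF assms bp_ok[OF o]] bsum_append[OF assms(2,1) D'(1)] D'(2)
    by (metis iso_obj_sym iso_obj_trans)
qed

lemma bsum_cons_cong:
  assumes "iso_obj C a a'" "iso_obj C (bsum xs) (bsum xs')"
  shows "iso_obj C (bsum (a # xs)) (bsum (a' # xs'))"
  using bp_iso'[OF bp_ok bp_ok assms] iso_obj_objs[OF assms(1)] iso_obj_objs[OF assms(2)] by simp

lemma iso_class_eq:
  assumes "x \<in> Obj C" "y \<in> Obj C"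
  shows "iso_class C x = iso_class C y \<longleftrightarrow> iso_obj C x y"
proof
  assume "iso_class C x = iso_class C y"
  then have "y \<in> iso_class C x" using assms iso_obj_refl unfolding iso_class_def by auto
  then show "iso_obj C x y" unfolding iso_class_def by auto
next
  assume "iso_obj C x y"
  then show "iso_class C x = iso_class C y"
    unfolding iso_class_def using iso_obj_sym iso_obj_trans by blast
qed

lemma bsum_perm:
  assumes "image_mset (iso_class C) (mset xs) = image_mset (iso_class C) (mset ys)"
    "set xs \<subseteq> Obj C" "set ys \<subseteq> Obj C"
  shows "iso_obj C (bsum xs) (bsum ys)"
  using assms
proof (induction xs arbitrary: ys)
  case Nil
  then show ?case using Z0 iso_obj_refl by simp
next
  case (Cons x xs)
  have "iso_class C x \<in># image_mset (iso_class C) (mset ys)" using Cons.prems(1) by (metis mset.simps(2) image_mset_add_mset union_single_eq_member)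
  then obtain y where y: "y \<in> set ys" "iso_class C y = iso_class C x" by auto
  obtain ys1 ys2 where ys: "ys = ys1 @ y # ys2" using split_list[OF y(1)] by auto
  have xy: "iso_obj C x y" using iso_class_eq[of x y] y Cons.prems by auto
  have "image_mset (iso_class C) (mset xs) = image_mset (iso_class C) (mset (ys1 @ ys2))"
    using Cons.prems(1) ys y(2) by simp
  then have ih: "iso_obj C (bsum xs) (bsum (ys1 @ ys2))" using Cons.IH Cons.prems ys by auto
  have o: "set ys1 \<subseteq> Obj C" "set ys2 \<subseteq> Obj C" "y \<in> Obj C" using Cons.prems ys by auto
  have 1: "iso_obj C (bsum (x # xs)) (bsum (y # ys1 @ ys2))" using bsum_cons_cong[OF xy ih] .
  have 2: "iso_obj C (bsum (y # ys1 @ ys2)) (bsum (y # ys2 @ ys1))"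
    using bsum_cons_cong[OF iso_obj_refl[OF o(3)] bsum_comm[OF o(1,2)]] .
  have 3: "iso_obj C (bsum (y # ys2 @ ys1)) (bsum (ys1 @ y # ys2))"
    using bsum_comm[of "y # ys2" ys1] o by (simp add: iso_obj_sym)
  show ?case using 1 2 3 ys by (metis iso_obj_trans)
qed

end


locale nang = acat C for C :: "('o,'m) addcat" +
  fixes SO :: "'o \<Rightarrow> 'o" and SM :: "'m \<Rightarrow> 'm" and n :: nat and N :: "('o list \<times> 'm list) set"
  assumes na: "n_angulated C SO SM n N"
begin

lemmas nas = na[unfolded n_angulated_def]
lemma n3: "3 \<le> n" using nas by (elim conjE)
lemma aut: "is_automorphism C SO SM" using nas by (elim conjE)
lemma Nseq': "\<forall>X \<in> N. nseq C SO n (fst X) (snd X)" using nas by (elim conjE)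
lemma Nsum': "\<forall>X Y Z. X \<in> N \<longrightarrow> Y \<in> N \<longrightarrow> nseq C SO n (fst Z) (snd Z) \<longrightarrow>
        seq_dsum C SM n X Y Z \<longrightarrow> Z \<in> N" using nas by (elim conjE)
lemma Niso': "\<forall>X Y. X \<in> N \<longrightarrow> nseq C SO n (fst Y) (snd Y) \<longrightarrow> seq_iso C SM n X Y \<longrightarrow> Y \<in> N"
  using nas by (elim conjE)
lemma Ntriv': "\<forall>A \<in> Obj C. \<forall>Z. is_zero_obj C Z \<longrightarrow> triv_seq C SO n A Z \<in> N" using nas by (elim conjE)
lemma Nrot': "\<forall>X. nseq C SO n (fst X) (snd X) \<longrightarrow> (X \<in> N \<longleftrightarrow> rotl C SO SM n X \<in> N)" using nas by (elim conjE)

lemmas auts = aut[unfolded is_automorphism_def]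
lemma aut1: "bij_betw SO (Obj C) (Obj C)" using auts by (elim conjE)
lemma aut3: "\<forall>A B f. f \<in> Hom C A B \<longrightarrow> SM f \<in> Hom C (SO A) (SO B)" using auts by (elim conjE)
lemma aut4: "\<forall>A B D f g. f \<in> Hom C A B \<longrightarrow> g \<in> Hom C B D \<longrightarrow> SM (cmp C g f) = cmp C (SM g) (SM f)" using auts by (elim conjE)
lemma aut5: "\<forall>A \<in> Obj C. SM (idm C A) = idm C (SO A)" using auts by (elim conjE)
lemma aut6: "\<forall>A B f g. f \<in> Hom C A B \<longrightarrow> g \<in> Hom C A B \<longrightarrow> SM (madd C f g) = madd C (SM f) (SM g)" using auts by (elim conjE)

lemma SO_obj[simp]: "A \<in> Obj C \<Longrightarrow> SO A \<in> Obj C"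
  using aut1 unfolding bij_betw_def by auto

lemma SM_typ[simp]:
  assumes "f \<in> Mor C"
  shows "SM f \<in> Mor C" "cdom C (SM f) = SO (cdom C f)" "ccod C (SM f) = SO (ccod C f)"
proof -
  have "f \<in> Hom C (cdom C f) (ccod C f)" using assms by (simp add: Hom_iff)
  then have "SM f \<in> Hom C (SO (cdom C f)) (SO (ccod C f))" using aut3 by blast
  then show "SM f \<in> Mor C" "cdom C (SM f) = SO (cdom C f)" "ccod C (SM f) = SO (ccod C f)"
    by (auto simp: Hom_iff)
qed

lemma SM_cmp:
  assumes "f \<in> Mor C" "g \<in> Mor C" "ccod C f = cdom C g"
  shows "SM (cmp C g f) = cmp C (SM g) (SM f)"
proof -
  have "f \<in> Hom C (cdom C f) (cdom C g)" "g \<in> Hom C (cdom C g) (ccod C g)" using assms by (auto simp: Hom_iff)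
  then show ?thesis using aut4 by blast
qed

lemma SM_idm[simp]: "A \<in> Obj C \<Longrightarrow> SM (idm C A) = idm C (SO A)" using aut5 by blast

lemma SM_madd:
  assumes "f \<in> Mor C" "g \<in> Mor C" "cdom C f = cdom C g" "ccod C f = ccod C g"
  shows "SM (madd C f g) = madd C (SM f) (SM g)"
proof -
  have "f \<in> Hom C (cdom C f) (ccod C f)" "g \<in> Hom C (cdom C f) (ccod C f)" using assms by (auto simp: Hom_iff)
  then show ?thesis using aut6 by blast
qed

lemma SM_zero[simp]:
  assumes "A \<in> Obj C" "B \<in> Obj C"
  shows "SM (mzero C A B) = mzero C (SO A) (SO B)"
proof -
  have t: "SM (mzero C A B) \<in> Mor C" "cdom C (SM (mzero C A B)) = SO A" "ccod C (SM (mzero C A B)) = SO B"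
    using assms by simp_all
  have "madd C (SM (mzero C A B)) (SM (mzero C A B)) = SM (madd C (mzero C A B) (mzero C A B))"
    by (rule SM_madd[symmetric]) (use assms in simp_all)
  also have "\<dots> = SM (mzero C A B)" using assms by simp
  finally show ?thesis using idem_zero[OF t(1)] t by simp
qed

lemma sig_biprod:
  assumes D: "is_biprod C X Y (S,i1,i2,p1,p2)"
  shows "is_biprod C (SO X) (SO Y) (SO S, SM i1, SM i2, SM p1, SM p2)"
proof -
  note b = bpD[OF D]
  have "SM (madd C (cmp C i1 p1) (cmp C i2 p2)) = madd C (cmp C (SM i1) (SM p1)) (cmp C (SM i2) (SM p2))"
    using b(1-15) by (simp add: SM_madd SM_cmp)
  then have e: "madd C (cmp C (SM i1) (SM p1)) (cmp C (SM i2) (SM p2)) = idm C (SO S)" using b by simp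
  have "SM (cmp C p1 i1) = cmp C (SM p1) (SM i1)" "SM (cmp C p2 i2) = cmp C (SM p2) (SM i2)"
    "SM (cmp C p1 i2) = cmp C (SM p1) (SM i2)" "SM (cmp C p2 i1) = cmp C (SM p2) (SM i1)"
    using b(1-15) by (simp_all add: SM_cmp)
  then show ?thesis using b e unfolding is_biprod_def by (simp add: Hom_iff)
qed

lemma SO_iso:
  assumes "iso_obj C A B" shows "iso_obj C (SO A) (SO B)"
proof -
  obtain f g where f: "f \<in> Mor C" "cdom C f = A" "ccod C f = B" "g \<in> Mor C" "cdom C g = B" "ccod C g = A"
    "cmp C g f = idm C A" "cmp C f g = idm C B" using assms by (rule iso_objE)
  have o: "A \<in> Obj C" "B \<in> Obj C" using f by (metis mor_obj)+
  show ?thesis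
  proof (rule iso_objI[of "SM f" _ _ "SM g"])
    show "cmp C (SM g) (SM f) = idm C (SO A)" using f o SM_cmp[of f g] by simp
    show "cmp C (SM f) (SM g) = idm C (SO B)" using f o SM_cmp[of g f] by simp
  qed (use f in simp_all)
qed

lemma SO_zero: "is_zero_obj C Z \<Longrightarrow> is_zero_obj C (SO Z)"
proof -
  assume z: "is_zero_obj C Z"
  then have o: "Z \<in> Obj C" and e: "idm C Z = mzero C Z Z" unfolding is_zero_obj_def by auto
  have "idm C (SO Z) = SM (idm C Z)" using o by simp
  also have "\<dots> = mzero C (SO Z) (SO Z)" using o e by simp
  finally show ?thesis using o unfolding is_zero_obj_def by simp
qed

definition sinv :: "'o \<Rightarrow> 'o" where "sinv B = inv_into (Obj C) SO B"

lemma sinv: "B \<in> Obj C \<Longrightarrow> sinv B \<in> Obj C" "B \<in> Obj C \<Longrightarrow> SO (sinv B) = B"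
proof -
  assume b: "B \<in> Obj C"
  then have "B \<in> SO ` Obj C" using aut1 unfolding bij_betw_def by simp
  then show "sinv B \<in> Obj C" "SO (sinv B) = B" unfolding sinv_def
    by (rule inv_into_into, rule f_inv_into_f)
qed

lemma bsum_SO: "set xs \<subseteq> Obj C \<Longrightarrow> iso_obj C (SO (bsum xs)) (bsum (map SO xs))"
proof (induction xs)
  case Nil
  then show ?case using zero_obj_iso[OF SO_zero[OF Z0(1)] Z0(1)] by simp
next
  case (Cons x xs)
  have o: "x \<in> Obj C" "bsum xs \<in> Obj C" "set (map SO xs) \<subseteq> Obj C" using Cons.prems bsum_obj by auto
  obtain S i1 i2 p1 p2 where d: "bp x (bsum xs) = (S,i1,i2,p1,p2)" by (cases "bp x (bsum xs)") auto
  have D: "is_biprod C (SO x) (SO (bsum xs)) (SO S, SM i1, SM i2, SM p1, SM p2)"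
    using sig_biprod bp_ok[OF o(1,2)] d by simp
  have "iso_obj C (SO S) (fst (bp (SO x) (bsum (map SO xs))))"
    using bp_iso'[OF D bp_ok[OF SO_obj[OF o(1)] bsum_obj[OF o(3)]] iso_obj_refl[OF SO_obj[OF o(1)]]]
      Cons.IH Cons.prems by simp
  then show ?case using d by simp
qed

lemma N_nseq: "(Os,fs) \<in> N \<Longrightarrow> nseq C SO n Os fs"
  using Nseq' by fastforce

lemma nseqD:
  assumes "nseq C SO n Os fs"
  shows "length Os = n" "length fs = n"
    "\<And>i. i < n - 1 \<Longrightarrow> fs ! i \<in> Mor C \<and> cdom C (fs ! i) = Os ! i \<and> ccod C (fs ! i) = Os ! Suc i"
    "fs ! (n - 1) \<in> Mor C" "cdom C (fs ! (n - 1)) = Os ! (n - 1)" "ccod C (fs ! (n - 1)) = SO (Os ! 0)"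
  using assms unfolding nseq_def by (auto simp: Hom_iff)

lemma N_objs:
  assumes "(Os,fs) \<in> N" shows "length Os = n" "\<And>i. i < n \<Longrightarrow> Os ! i \<in> Obj C"
proof -
  note d = nseqD[OF N_nseq[OF assms]]
  show "length Os = n" using d by simp
  fix i assume i: "i < n"
  show "Os ! i \<in> Obj C"
  proof (cases "i < n - 1")
    case True then show ?thesis using d(3)[OF True] mor_obj by metis
  next
    case False then have "i = n - 1" using i by simp
    then show ?thesis using d(4,5) mor_obj by metis
  qed
qed

lemma transport:
  assumes X: "(Os,fs) \<in> N" and L: "length Ps = n" and I: "\<forall>i<n. iso_obj C (Os ! i) (Ps ! i)"
  shows "\<exists>gs. (Ps,gs) \<in> N"
proof -
  note d = nseqD[OF N_nseq[OF X]]
  define isop where "isop i f g \<longleftrightarrow> f \<in> Mor C \<and> cdom C f = Os ! i \<and> ccod C f = Ps ! i \<and> g \<in> Mor C \<and> cdom C g = Ps ! i \<and> ccod C g = Os ! i \<and>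
    cmp C g f = idm C (Os ! i) \<and> cmp C f g = idm C (Ps ! i)" for i f g
  have "\<forall>i. \<exists>fg. i < n \<longrightarrow> isop i (fst fg) (snd fg)"
  proof
    fix i show "\<exists>fg. i < n \<longrightarrow> isop i (fst fg) (snd fg)"
    proof (cases "i < n")
      case True
      then obtain f g where "isop i f g" using I iso_objE unfolding isop_def by metis
      then show ?thesis by (intro exI[of _ "(f,g)"]) simp
    qed simp
  qed
  then obtain FG where FG: "\<And>i. i < n \<Longrightarrow> isop i (fst (FG i)) (snd (FG i))" by metis
  define F where "F i = fst (FG i)" for i
  define G where "G i = snd (FG i)" for i
  have F: "\<And>i. i < n \<Longrightarrow> F i \<in> Mor C \<and> cdom C (F i) = Os ! i \<and> ccod C (F i) = Ps ! i"
    and G: "\<And>i. i < n \<Longrightarrow> G i \<in> Mor C \<and> cdom C (G i) = Ps ! i \<and> ccod C (G i) = Os ! i"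
    and GF: "\<And>i. i < n \<Longrightarrow> cmp C (G i) (F i) = idm C (Os ! i)"
    and FGi: "\<And>i. i < n \<Longrightarrow> cmp C (F i) (G i) = idm C (Ps ! i)"
    using FG unfolding isop_def F_def G_def by auto
  have n0: "0 < n" "n - 1 < n" using n3 by auto
  define gg where "gg i = (if i < n - 1 then cmp C (F (Suc i)) (cmp C (fs ! i) (G i))
      else cmp C (SM (F 0)) (cmp C (fs ! (n - 1)) (G (n - 1))))" for i
  define gs where "gs = map gg [0..<n]"
  have gsi: "\<And>i. i < n \<Longrightarrow> gs ! i = gg i" unfolding gs_def by simp
  have ns: "nseq C SO n Ps gs"
    unfolding nseq_def
  proof (intro conjI allI impI)
    show "length Ps = n" "length gs = n" using L gs_def by auto
    fix i assume i: "i < n - 1"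
    then have i': "i < n" "Suc i < n" by auto
    show "gs ! i \<in> Hom C (Ps ! i) (Ps ! Suc i)"
      using gsi[OF i'(1)] i F[OF i'(2)] G[OF i'(1)] d(3)[OF i] unfolding gg_def by (simp add: Hom_iff)
  next
    show "gs ! (n - 1) \<in> Hom C (Ps ! (n - 1)) (SO (Ps ! 0))"
      using gsi[OF n0(2)] F[OF n0(1)] G[OF n0(2)] d(4-6) unfolding gg_def by (simp add: Hom_iff)
  qed
  have sm: "seq_mor C SM n (Os,fs) (Ps,gs) (map F [0..<n])"
    unfolding seq_mor_def
  proof (simp only: prod.case, intro conjI allI impI)
    show "length (map F [0..<n]) = n" by simp
    fix i assume i: "i < n"
    show "map F [0..<n] ! i \<in> Hom C (Os ! i) (Ps ! i)" using F[OF i] i by (simp add: Hom_iff)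
  next
    fix i assume i: "i < n - 1"
    then have i': "i < n" "Suc i < n" by auto
    show "cmp C (gs ! i) (map F [0..<n] ! i) = cmp C (map F [0..<n] ! Suc i) (fs ! i)"
      using gsi[OF i'(1)] i F[OF i'(2)] F[OF i'(1)] G[OF i'(1)] GF[OF i'(1)] d(3)[OF i] unfolding gg_def
      by (simp add: cmp_assoc)
  next
    show "cmp C (gs ! (n - 1)) (map F [0..<n] ! (n - 1)) = cmp C (SM (map F [0..<n] ! 0)) (fs ! (n - 1))"
      using gsi[OF n0(2)] F[OF n0(1)] F[OF n0(2)] G[OF n0(2)] GF[OF n0(2)] d(4-6) n0 unfolding gg_def
      by (simp add: cmp_assoc)
  qed
  have "seq_iso C SM n (Os,fs) (Ps,gs)"
    unfolding seq_iso_def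
  proof (intro exI conjI allI impI)
    show "seq_mor C SM n (Os,fs) (Ps,gs) (map F [0..<n])" by (rule sm)
    fix i assume i: "i < n"
    show "is_iso C (map F [0..<n] ! i)"
      unfolding is_iso_def using F[OF i] G[OF i] GF[OF i] FGi[OF i] i
      by (intro conjI bexI[of _ "G i"]) (auto simp: Hom_iff)
  qed
  then have "(Ps,gs) \<in> N" using Niso' X ns by fastforce
  then show ?thesis by blast
qed

lemma rot:
  assumes X: "(Os,fs) \<in> N"
  shows "\<exists>gs. (tl Os @ [SO (hd Os)], gs) \<in> N"
proof -
  note d = nseqD[OF N_nseq[OF X]]
  define h where "h = (if even n then SM (hd fs) else mneg C (SM (hd fs)))"
  have n0: "0 < n - 1" using n3 by simp
  have ne: "Os \<noteq> []" "fs \<noteq> []" using d(1,2) n3 by auto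
  have hd: "hd Os = Os ! 0" "hd fs = fs ! 0" using ne by (simp_all add: hd_conv_nth)
  have f0: "fs ! 0 \<in> Mor C" "cdom C (fs ! 0) = Os ! 0" "ccod C (fs ! 0) = Os ! 1" using d(3)[OF n0] by auto
  have ht: "h \<in> Mor C" "cdom C h = SO (Os ! 0)" "ccod C h = SO (Os ! 1)"
    unfolding h_def using f0 hd by auto
  have ns: "nseq C SO n (tl Os @ [SO (hd Os)]) (tl fs @ [h])"
    unfolding nseq_def
  proof (intro conjI allI impI)
    show "length (tl Os @ [SO (hd Os)]) = n" "length (tl fs @ [h]) = n" using d(1,2) n3 by auto
    fix i assume i: "i < n - 1"
    show "(tl fs @ [h]) ! i \<in> Hom C ((tl Os @ [SO (hd Os)]) ! i) ((tl Os @ [SO (hd Os)]) ! Suc i)"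
    proof (cases "i < n - 2")
      case True
      then have "Suc i < n - 1" by simp
      then show ?thesis using d(1,2) d(3)[of "Suc i"] True by (simp add: nth_append nth_tl Hom_iff)
    next
      case False
      then have ii: "i = n - 2" using i by simp
      have e: "Suc (n - 2) = n - 1" using n3 by simp
      show ?thesis using d(1,2,4,5,6) ii n3 hd e by (simp add: nth_append nth_tl Hom_iff)
    qed
  next
    show "(tl fs @ [h]) ! (n - 1) \<in> Hom C ((tl Os @ [SO (hd Os)]) ! (n - 1)) (SO ((tl Os @ [SO (hd Os)]) ! 0))"
      using d(1,2) n3 ht hd by (simp add: nth_append nth_tl Hom_iff)
  qed
  have "rotl C SO SM n (Os,fs) = (tl Os @ [SO (hd Os)], tl fs @ [h])"
    unfolding rotl_def h_def by simp
  moreover have "rotl C SO SM n (Os,fs) \<in> N" using Nrot' X N_nseq[OF X] by fastforce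
  ultimately show ?thesis by auto
qed

lemma triv:
  assumes "A \<in> Obj C" shows "\<exists>fs. ([A, A] @ replicate (n - 2) Z0, fs) \<in> N"
proof -
  have "triv_seq C SO n A Z0 \<in> N" using Ntriv' assms Z0 by blast
  then show ?thesis unfolding triv_seq_def by blast
qed

end


context nang begin

lemma dsum:
  assumes X: "(Os,fs) \<in> N" and Y: "(Os',fs') \<in> N"
  shows "\<exists>Ps gs. (Ps,gs) \<in> N \<and> length Ps = n \<and> (\<forall>i<n. \<exists>D. is_biprod C (Os ! i) (Os' ! i) D \<and> fst D = Ps ! i)"
proof -
  note d = nseqD[OF N_nseq[OF X]] and d' = nseqD[OF N_nseq[OF Y]]
  have n0: "0 < n" "n - 1 < n" "0 < n - 1" using n3 by auto
  define D where "D i = bp (Os ! i) (Os' ! i)" for i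
  define S where "S i = fst (D i)" for i
  define I1 where "I1 i = fst (snd (D i))" for i
  define I2 where "I2 i = fst (snd (snd (D i)))" for i
  define P1 where "P1 i = fst (snd (snd (snd (D i))))" for i
  define P2 where "P2 i = snd (snd (snd (snd (D i))))" for i
  have Db: "\<And>i. i < n \<Longrightarrow> is_biprod C (Os ! i) (Os' ! i) (S i, I1 i, I2 i, P1 i, P2 i)"
  proof -
    fix i assume i: "i < n"
    have "D i = (S i, I1 i, I2 i, P1 i, P2 i)" unfolding S_def I1_def I2_def P1_def P2_def by simp
    moreover have "is_biprod C (Os ! i) (Os' ! i) (D i)"
      unfolding D_def by (rule bp_ok[OF N_objs(2)[OF X i] N_objs(2)[OF Y i]])
    ultimately show "is_biprod C (Os ! i) (Os' ! i) (S i, I1 i, I2 i, P1 i, P2 i)" by simp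
  qed
  have sD: "is_biprod C (SO (Os ! 0)) (SO (Os' ! 0)) (SO (S 0), SM (I1 0), SM (I2 0), SM (P1 0), SM (P2 0))"
    using sig_biprod[OF Db[OF n0(1)]] .
  define gg where "gg i = (if i < n - 1 then diag (I1 (Suc i)) (I2 (Suc i)) (P1 i) (P2 i) (fs ! i) (fs' ! i)
      else diag (SM (I1 0)) (SM (I2 0)) (P1 (n - 1)) (P2 (n - 1)) (fs ! (n - 1)) (fs' ! (n - 1)))" for i
  define Ps where "Ps = map S [0..<n]"
  define gs where "gs = map gg [0..<n]"
  have gsi: "\<And>i. i < n \<Longrightarrow> gs ! i = gg i" unfolding gs_def by simp
  have Psi: "\<And>i. i < n \<Longrightarrow> Ps ! i = S i" unfolding Ps_def by simp
  have fi: "\<And>i. i < n - 1 \<Longrightarrow> fs ! i \<in> Mor C" "\<And>i. i < n - 1 \<Longrightarrow> cdom C (fs ! i) = Os ! i"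
      "\<And>i. i < n - 1 \<Longrightarrow> ccod C (fs ! i) = Os ! Suc i"
    and fi': "\<And>i. i < n - 1 \<Longrightarrow> fs' ! i \<in> Mor C" "\<And>i. i < n - 1 \<Longrightarrow> cdom C (fs' ! i) = Os' ! i"
      "\<And>i. i < n - 1 \<Longrightarrow> ccod C (fs' ! i) = Os' ! Suc i"
    using d(3) d'(3) by auto
  have mid: "\<And>i. i < n - 1 \<Longrightarrow>
      diag (I1 (Suc i)) (I2 (Suc i)) (P1 i) (P2 i) (fs ! i) (fs' ! i) \<in> Mor C \<and>
      cdom C (diag (I1 (Suc i)) (I2 (Suc i)) (P1 i) (P2 i) (fs ! i) (fs' ! i)) = S i \<and>
      ccod C (diag (I1 (Suc i)) (I2 (Suc i)) (P1 i) (P2 i) (fs ! i) (fs' ! i)) = S (Suc i) \<and>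
      cmp C (diag (I1 (Suc i)) (I2 (Suc i)) (P1 i) (P2 i) (fs ! i) (fs' ! i)) (I1 i) = cmp C (I1 (Suc i)) (fs ! i) \<and>
      cmp C (diag (I1 (Suc i)) (I2 (Suc i)) (P1 i) (P2 i) (fs ! i) (fs' ! i)) (I2 i) = cmp C (I2 (Suc i)) (fs' ! i) \<and>
      cmp C (P1 (Suc i)) (diag (I1 (Suc i)) (I2 (Suc i)) (P1 i) (P2 i) (fs ! i) (fs' ! i)) = cmp C (fs ! i) (P1 i) \<and>
      cmp C (P2 (Suc i)) (diag (I1 (Suc i)) (I2 (Suc i)) (P1 i) (P2 i) (fs ! i) (fs' ! i)) = cmp C (fs' ! i) (P2 i)"
  proof -
    fix i assume i: "i < n - 1"
    then have i': "i < n" "Suc i < n" by auto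
    note A = Db[OF i'(1)] Db[OF i'(2)] fi[OF i] fi'[OF i]
    show "?thesis i"
      using diag_typ[OF A] diag_i1[OF A] diag_i2[OF A] diag_p1[OF A] diag_p2[OF A] by simp
  qed
  have f1: "fs ! (n - 1) \<in> Mor C" "cdom C (fs ! (n - 1)) = Os ! (n - 1)" "ccod C (fs ! (n - 1)) = SO (Os ! 0)"
    and f1': "fs' ! (n - 1) \<in> Mor C" "cdom C (fs' ! (n - 1)) = Os' ! (n - 1)" "ccod C (fs' ! (n - 1)) = SO (Os' ! 0)"
    using d(4-6) d'(4-6) by auto
  note A = Db[OF n0(2)] sD f1 f1'
  note L = diag_typ[OF A] diag_i1[OF A] diag_i2[OF A] diag_p1[OF A] diag_p2[OF A]
  have last: "gs ! (n - 1) = diag (SM (I1 0)) (SM (I2 0)) (P1 (n - 1)) (P2 (n - 1)) (fs ! (n - 1)) (fs' ! (n - 1))"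
    using gsi[OF n0(2)] unfolding gg_def by simp
  have gsm: "\<And>i. i < n - 1 \<Longrightarrow> gs ! i = diag (I1 (Suc i)) (I2 (Suc i)) (P1 i) (P2 i) (fs ! i) (fs' ! i)"
    using gsi unfolding gg_def by simp
  have ns: "nseq C SO n Ps gs"
    unfolding nseq_def
  proof (intro conjI allI impI)
    show "length Ps = n" "length gs = n" unfolding Ps_def gs_def by auto
    fix i assume i: "i < n - 1"
    then show "gs ! i \<in> Hom C (Ps ! i) (Ps ! Suc i)" using gsm[OF i] mid[OF i] Psi[of i] Psi[of "Suc i"]
      by (simp add: Hom_iff)
  next
    show "gs ! (n - 1) \<in> Hom C (Ps ! (n - 1)) (SO (Ps ! 0))" using last L Psi n0 by (simp add: Hom_iff)
  qed
  have sdum: "seq_dsum C SM n (Os,fs) (Os',fs') (Ps,gs)"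
    unfolding seq_dsum_def
  proof (intro exI conjI allI impI)
    show "seq_mor C SM n (Os, fs) (Ps, gs) (map I1 [0..<n])"
      unfolding seq_mor_def
    proof (simp only: prod.case, intro conjI allI impI)
      fix i assume i: "i < n" show "map I1 [0..<n] ! i \<in> Hom C (Os ! i) (Ps ! i)"
        using bpD[OF Db[OF i]] Psi[OF i] i by (simp add: Hom_iff)
    next
      fix i assume i: "i < n - 1"
      show "cmp C (gs ! i) (map I1 [0..<n] ! i) = cmp C (map I1 [0..<n] ! Suc i) (fs ! i)"
        using gsm[OF i] mid[OF i] i by simp
    next
      show "cmp C (gs ! (n - 1)) (map I1 [0..<n] ! (n - 1)) = cmp C (SM (map I1 [0..<n] ! 0)) (fs ! (n - 1))"
        using last L n0 by simp
    qed simp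
    show "seq_mor C SM n (Os', fs') (Ps, gs) (map I2 [0..<n])"
      unfolding seq_mor_def
    proof (simp only: prod.case, intro conjI allI impI)
      fix i assume i: "i < n" show "map I2 [0..<n] ! i \<in> Hom C (Os' ! i) (Ps ! i)"
        using bpD[OF Db[OF i]] Psi[OF i] i by (simp add: Hom_iff)
    next
      fix i assume i: "i < n - 1"
      show "cmp C (gs ! i) (map I2 [0..<n] ! i) = cmp C (map I2 [0..<n] ! Suc i) (fs' ! i)"
        using gsm[OF i] mid[OF i] i by simp
    next
      show "cmp C (gs ! (n - 1)) (map I2 [0..<n] ! (n - 1)) = cmp C (SM (map I2 [0..<n] ! 0)) (fs' ! (n - 1))"
        using last L n0 by simp
    qed simp
    show "seq_mor C SM n (Ps, gs) (Os, fs) (map P1 [0..<n])"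
      unfolding seq_mor_def
    proof (simp only: prod.case, intro conjI allI impI)
      fix i assume i: "i < n" show "map P1 [0..<n] ! i \<in> Hom C (Ps ! i) (Os ! i)"
        using bpD[OF Db[OF i]] Psi[OF i] i by (simp add: Hom_iff)
    next
      fix i assume i: "i < n - 1"
      show "cmp C (fs ! i) (map P1 [0..<n] ! i) = cmp C (map P1 [0..<n] ! Suc i) (gs ! i)"
        using gsm[OF i] mid[OF i] i by simp
    next
      show "cmp C (fs ! (n - 1)) (map P1 [0..<n] ! (n - 1)) = cmp C (SM (map P1 [0..<n] ! 0)) (gs ! (n - 1))"
        using last L n0 by simp
    qed simp
    show "seq_mor C SM n (Ps, gs) (Os', fs') (map P2 [0..<n])"
      unfolding seq_mor_def
    proof (simp only: prod.case, intro conjI allI impI)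
      fix i assume i: "i < n" show "map P2 [0..<n] ! i \<in> Hom C (Ps ! i) (Os' ! i)"
        using bpD[OF Db[OF i]] Psi[OF i] i by (simp add: Hom_iff)
    next
      fix i assume i: "i < n - 1"
      show "cmp C (fs' ! i) (map P2 [0..<n] ! i) = cmp C (map P2 [0..<n] ! Suc i) (gs ! i)"
        using gsm[OF i] mid[OF i] i by simp
    next
      show "cmp C (fs' ! (n - 1)) (map P2 [0..<n] ! (n - 1)) = cmp C (SM (map P2 [0..<n] ! 0)) (gs ! (n - 1))"
        using last L n0 by simp
    qed simp
    fix i assume i: "i < n"
    show "is_biprod C (fst (Os, fs) ! i) (fst (Os', fs') ! i)
        (fst (Ps, gs) ! i, map I1 [0..<n] ! i, map I2 [0..<n] ! i, map P1 [0..<n] ! i, map P2 [0..<n] ! i)"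
      using Db[OF i] Psi[OF i] i by simp
  qed
  have "(Ps,gs) \<in> N" using Nsum'[rule_format, of "(Os,fs)" "(Os',fs')" "(Ps,gs)"] X Y ns sdum by simp
  moreover have "\<forall>i<n. \<exists>D. is_biprod C (Os ! i) (Os' ! i) D \<and> fst D = Ps ! i"
  proof (intro allI impI)
    fix i assume i: "i < n"
    show "\<exists>D. is_biprod C (Os ! i) (Os' ! i) D \<and> fst D = Ps ! i"
      by (rule exI[of _ "(S i, I1 i, I2 i, P1 i, P2 i)"]) (simp add: Db[OF i] Psi[OF i])
  qed
  moreover have "length Ps = n" unfolding Ps_def by simp
  ultimately show ?thesis by blast
qed

end


context nang begin

definition realizable :: "(nat \<Rightarrow> 'o multiset) \<Rightarrow> bool" where
  "realizable L \<longleftrightarrow> (\<exists>Os fs. (Os,fs) \<in> N \<and>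
     (\<forall>i<n. set_mset (L i) \<subseteq> Obj C \<and> (\<exists>xs. mset xs = L i \<and> iso_obj C (Os ! i) (bsum xs))))"

lemma realizableI:
  assumes "(Os,fs) \<in> N" "\<And>i. i < n \<Longrightarrow> set_mset (L i) \<subseteq> Obj C"
    "\<And>i. i < n \<Longrightarrow> \<exists>xs. mset xs = L i \<and> iso_obj C (Os ! i) (bsum xs)"
  shows "realizable L"
  unfolding realizable_def using assms by blast

lemma R_cong: "(\<And>i. i < n \<Longrightarrow> L i = M i) \<Longrightarrow> realizable L \<Longrightarrow> realizable M"
  unfolding realizable_def by (metis (no_types, lifting))

lemma R_obj: "realizable L \<Longrightarrow> i < n \<Longrightarrow> set_mset (L i) \<subseteq> Obj C"
  unfolding realizable_def by blast

lemma R_add: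
  assumes L: "realizable L" and M: "realizable M"
  shows "realizable (\<lambda>i. L i + M i)"
proof -
  obtain Os fs where X: "(Os,fs) \<in> N" and XL: "\<forall>i<n. set_mset (L i) \<subseteq> Obj C \<and> (\<exists>xs. mset xs = L i \<and> iso_obj C (Os ! i) (bsum xs))"
    using L unfolding realizable_def by blast
  obtain Os' fs' where Y: "(Os',fs') \<in> N" and YM: "\<forall>i<n. set_mset (M i) \<subseteq> Obj C \<and> (\<exists>xs. mset xs = M i \<and> iso_obj C (Os' ! i) (bsum xs))"
    using M unfolding realizable_def by blast
  obtain Ps gs where Z: "(Ps,gs) \<in> N" and PD: "\<forall>i<n. \<exists>D. is_biprod C (Os ! i) (Os' ! i) D \<and> fst D = Ps ! i"
    using dsum[OF X Y] by blast
  show ?thesis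
  proof (rule realizableI[OF Z])
    fix i assume i: "i < n"
    show "set_mset (L i + M i) \<subseteq> Obj C" using XL YM i by auto
    obtain xs where xs: "mset xs = L i" "iso_obj C (Os ! i) (bsum xs)" using XL i by blast
    obtain ys where ys: "mset ys = M i" "iso_obj C (Os' ! i) (bsum ys)" using YM i by blast
    obtain D where D: "is_biprod C (Os ! i) (Os' ! i) D" "fst D = Ps ! i" using PD i by blast
    have "set_mset (L i) \<subseteq> Obj C" "set_mset (M i) \<subseteq> Obj C" using XL YM i by auto
    moreover have "set xs = set_mset (L i)" "set ys = set_mset (M i)" using xs(1) ys(1) by (metis set_mset_mset)+
    ultimately have so: "set xs \<subseteq> Obj C" "set ys \<subseteq> Obj C" by auto
    have o: "bsum xs \<in> Obj C" "bsum ys \<in> Obj C" using so bsum_obj by auto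
    have 1: "iso_obj C (Ps ! i) (fst (bp (bsum xs) (bsum ys)))"
      using bp_iso'[OF D(1) bp_ok[OF o] xs(2) ys(2)] D(2) by simp
    have 2: "iso_obj C (bsum (xs @ ys)) (fst (bp (bsum xs) (bsum ys)))"
      using bsum_append[OF so bp_ok[OF o]] .
    show "\<exists>zs. mset zs = L i + M i \<and> iso_obj C (Ps ! i) (bsum zs)"
      using iso_obj_trans[OF 1 iso_obj_sym[OF 2]] xs(1) ys(1) by (intro exI[of _ "xs @ ys"]) simp
  qed
qed

lemma triv_nth: "i < n \<Longrightarrow> ([A, A] @ replicate (n - 2) Z) ! i = (if i < 2 then A else Z)"
  by (cases "i < 2") (auto simp: nth_append less_2_cases_iff)

lemma R_zero: "realizable (\<lambda>i. {#})"
proof -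
  obtain fs where X: "([Z0, Z0] @ replicate (n - 2) Z0, fs) \<in> N" using triv Z0 by blast
  show ?thesis
  proof (rule realizableI[OF X])
    fix i assume i: "i < n"
    have t: "([Z0, Z0] @ replicate (n - 2) Z0) ! i = Z0" by (subst triv_nth[OF i]) simp
    show "\<exists>xs. mset xs = {#} \<and> iso_obj C (([Z0, Z0] @ replicate (n - 2) Z0) ! i) (bsum xs)"
      unfolding t using iso_obj_refl[OF Z0(2)] by (intro exI[of _ "[]"]) simp
  qed simp
qed

lemma R_edge0:
  assumes A: "A \<in> Obj C"
  shows "realizable (\<lambda>i. if i = 0 \<or> i = 1 then {#A#} else {#})"
proof -
  obtain fs where X: "([A, A] @ replicate (n - 2) Z0, fs) \<in> N" using triv A by blast
  show ?thesis
  proof (rule realizableI[OF X])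
    fix i assume i: "i < n"
    show "set_mset (if i = 0 \<or> i = 1 then {#A#} else {#}) \<subseteq> Obj C" using A by auto
    show "\<exists>xs. mset xs = (if i = 0 \<or> i = 1 then {#A#} else {#}) \<and> iso_obj C (([A, A] @ replicate (n - 2) Z0) ! i) (bsum xs)"
    proof (cases "i = 0 \<or> i = 1")
      case True
      then have t: "([A, A] @ replicate (n - 2) Z0) ! i = A" by (subst triv_nth[OF i]) auto
      show ?thesis unfolding t using True iso_obj_sym[OF bsum_single[OF A]]
        by (intro exI[of _ "[A]"]) auto
    next
      case False
      then have t: "([A, A] @ replicate (n - 2) Z0) ! i = Z0" by (subst triv_nth[OF i]) auto
      show ?thesis unfolding t using False iso_obj_refl[OF Z0(2)]
        by (intro exI[of _ "[]"]) auto
    qed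
  qed
qed

definition vrot :: "(nat \<Rightarrow> 'o multiset) \<Rightarrow> nat \<Rightarrow> 'o multiset" where
  "vrot L i = (if i < n - 1 then L (Suc i) else if i = n - 1 then image_mset SO (L 0) else {#})"

lemma R_rot:
  assumes L: "realizable L" shows "realizable (vrot L)"
proof -
  obtain Os fs where X: "(Os,fs) \<in> N" and XL: "\<forall>i<n. set_mset (L i) \<subseteq> Obj C \<and> (\<exists>xs. mset xs = L i \<and> iso_obj C (Os ! i) (bsum xs))"
    using L unfolding realizable_def by blast
  obtain gs where Y: "(tl Os @ [SO (hd Os)], gs) \<in> N" using rot[OF X] by blast
  have len: "length Os = n" using N_objs(1)[OF X] .
  have n0: "0 < n" using n3 by simp
  have hd: "hd Os = Os ! 0" using len n0 by (cases Os) auto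
  show ?thesis
  proof (rule realizableI[OF Y])
    fix i assume i: "i < n"
    show "set_mset (vrot L i) \<subseteq> Obj C"
    proof (cases "i < n - 1")
      case True then show ?thesis using XL unfolding vrot_def by auto
    next
      case False
      have "set_mset (L 0) \<subseteq> Obj C" using XL n0 by blast
      then show ?thesis using False unfolding vrot_def by auto
    qed
    show "\<exists>xs. mset xs = vrot L i \<and> iso_obj C ((tl Os @ [SO (hd Os)]) ! i) (bsum xs)"
    proof (cases "i < n - 1")
      case True
      then have "(tl Os @ [SO (hd Os)]) ! i = Os ! Suc i" using len by (simp add: nth_append nth_tl)
      moreover have "Suc i < n" using True by simp
      ultimately show ?thesis using XL True unfolding vrot_def by auto
    next
      case False
      then have ii: "i = n - 1" using i by simp
      then have e: "(tl Os @ [SO (hd Os)]) ! i = SO (Os ! 0)" using len n0 hd by (simp add: nth_append)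
      obtain xs where xs: "mset xs = L 0" "iso_obj C (Os ! 0) (bsum xs)" using XL n0 by blast
      have "set_mset (L 0) \<subseteq> Obj C" using XL n0 by blast
      moreover have "set xs = set_mset (L 0)" using xs(1) by (metis set_mset_mset)
      ultimately have so: "set xs \<subseteq> Obj C" by simp
      have "iso_obj C (SO (Os ! 0)) (bsum (map SO xs))"
        using iso_obj_trans[OF SO_iso[OF xs(2)] bsum_SO[OF so]] .
      then show ?thesis using e ii xs(1) unfolding vrot_def by (intro exI[of _ "map SO xs"]) simp
    qed
  qed
qed

definition edge :: "nat \<Rightarrow> 'o multiset \<Rightarrow> nat \<Rightarrow> 'o multiset" where
  "edge k Q i = (if i = k \<or> i = Suc k then Q else {#})"

lemma R_edge_single:
  assumes B: "B \<in> Obj C" and k: "k \<le> n - 2"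
  shows "realizable (edge k {#B#})"
proof -
  have e0: "realizable (edge 0 {#A#})" if "A \<in> Obj C" for A
    using R_edge0[OF that] unfolding edge_def by simp
  have top: "realizable (edge (n - 2) {#B#})"
  proof -
    have A: "sinv B \<in> Obj C" "SO (sinv B) = B" using sinv B by auto
    have r2: "realizable (vrot (vrot (edge 0 {#sinv B#})))" using R_rot e0[OF A(1)] by blast
    show ?thesis
    proof (rule R_cong[OF _ r2])
      fix i assume i: "i < n"
      show "vrot (vrot (edge 0 {#sinv B#})) i = edge (n - 2) {#B#} i"
        using i n3 A(2) unfolding vrot_def edge_def by auto
    qed
  qed
  have "\<forall>j. j \<le> n - 2 \<longrightarrow> realizable (edge (n - 2 - j) {#B#})"
  proof (intro allI)
    fix j show "j \<le> n - 2 \<longrightarrow> realizable (edge (n - 2 - j) {#B#})"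
    proof (induction j)
      case 0 then show ?case using top by simp
    next
      case (Suc j)
      show ?case
      proof
        assume j: "Suc j \<le> n - 2"
        then have r: "realizable (vrot (edge (n - 2 - j) {#B#}))" using Suc R_rot by simp
        show "realizable (edge (n - 2 - Suc j) {#B#})"
        proof (rule R_cong[OF _ r])
          fix i assume i: "i < n"
          have e: "n - 2 - j = Suc (n - 2 - Suc j)" using j by simp
          show "vrot (edge (n - 2 - j) {#B#}) i = edge (n - 2 - Suc j) {#B#} i"
            using i j n3 unfolding vrot_def edge_def e by auto
        qed
      qed
    qed
  qed
  then have "realizable (edge (n - 2 - (n - 2 - k)) {#B#})" by simp
  moreover have "n - 2 - (n - 2 - k) = k" using k by simp
  ultimately show ?thesis by simp
qed

lemma R_edge:
  assumes Q: "set_mset Q \<subseteq> Obj C" and k: "k \<le> n - 2"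
  shows "realizable (edge k Q)"
  using Q
proof (induction Q)
  case empty
  then show ?case using R_zero unfolding edge_def by simp
next
  case (add x Q)
  have r: "realizable (\<lambda>i. edge k {#x#} i + edge k Q i)"
    using R_add[OF R_edge_single[OF _ k] add.IH] add.prems by simp
  show ?case by (rule R_cong[OF _ r]) (simp add: edge_def)
qed

end


lemma ccm_trans:
  fixes a b c d e f g :: "'a::cancel_comm_monoid_add"
  assumes "a + b = c + d" "c + e = f + g"
  shows "a + (b + e) = f + (g + d)"
proof -
  have "a + (b + e) + c = (a + b) + (c + e)" by (simp add: ac_simps)
  also have "\<dots> = (c + d) + (f + g)" using assms by simp
  also have "\<dots> = f + (g + d) + c" by (simp add: ac_simps)
  finally show ?thesis by simp
qed

context nang begin

abbreviation imc :: "'o multiset \<Rightarrow> 'o set multiset" where "imc \<equiv> image_mset (iso_class C)"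

definition dl :: "nat \<Rightarrow> 'o multiset \<Rightarrow> nat \<Rightarrow> 'o multiset" where
  "dl k Q i = (if i = k then Q else {#})"

definition vrel :: "(nat \<Rightarrow> 'o multiset) \<Rightarrow> (nat \<Rightarrow> 'o multiset) \<Rightarrow> bool" where
  "vrel L M \<longleftrightarrow> (\<exists>R R'. realizable R \<and> realizable R' \<and> (\<forall>i<n. imc (L i + R i) = imc (M i + R' i)))"

lemma vrel_refl: "vrel L L"
  unfolding vrel_def using R_zero by (intro exI[of _ "\<lambda>i. {#}"]) simp

lemma vrel_sym: "vrel L M \<Longrightarrow> vrel M L"
proof -
  assume "vrel L M"
  then obtain R R' where r: "realizable R" "realizable R'" "\<forall>i<n. imc (L i + R i) = imc (M i + R' i)"
    unfolding vrel_def by blast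
  show "vrel M L" unfolding vrel_def using r by (intro exI[of _ R'] exI[of _ R]) simp
qed

lemma vrel_trans:
  assumes "vrel L M" "vrel M K" shows "vrel L K"
proof -
  obtain R1 R1' where r1: "realizable R1" "realizable R1'" "\<forall>i<n. imc (L i + R1 i) = imc (M i + R1' i)"
    using assms(1) unfolding vrel_def by blast
  obtain R2 R2' where r2: "realizable R2" "realizable R2'" "\<forall>i<n. imc (M i + R2 i) = imc (K i + R2' i)"
    using assms(2) unfolding vrel_def by blast
  have "\<forall>i<n. imc (L i + (R1 i + R2 i)) = imc (K i + (R2' i + R1' i))"
  proof (intro allI impI)
    fix i assume i: "i < n"
    have "imc (L i) + imc (R1 i) = imc (M i) + imc (R1' i)" "imc (M i) + imc (R2 i) = imc (K i) + imc (R2' i)"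
      using r1(3) r2(3) i by auto
    from ccm_trans[OF this] show "imc (L i + (R1 i + R2 i)) = imc (K i + (R2' i + R1' i))" by simp
  qed
  then show ?thesis unfolding vrel_def using R_add[OF r1(1) r2(1)] R_add[OF r2(2) r1(2)]
    by (intro exI[of _ "\<lambda>i. R1 i + R2 i"] exI[of _ "\<lambda>i. R2' i + R1' i"]) simp
qed

lemma vrel_add:
  assumes "vrel L M" "vrel L' M'" shows "vrel (\<lambda>i. L i + L' i) (\<lambda>i. M i + M' i)"
proof -
  obtain R1 R1' where r1: "realizable R1" "realizable R1'" "\<forall>i<n. imc (L i + R1 i) = imc (M i + R1' i)"
    using assms(1) unfolding vrel_def by blast
  obtain R2 R2' where r2: "realizable R2" "realizable R2'" "\<forall>i<n. imc (L' i + R2 i) = imc (M' i + R2' i)"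
    using assms(2) unfolding vrel_def by blast
  have "\<forall>i<n. imc ((L i + L' i) + (R1 i + R2 i)) = imc ((M i + M' i) + (R1' i + R2' i))"
  proof (intro allI impI)
    fix i assume i: "i < n"
    have "imc (L i) + imc (R1 i) = imc (M i) + imc (R1' i)" "imc (L' i) + imc (R2 i) = imc (M' i) + imc (R2' i)"
      using r1(3) r2(3) i by auto
    then have "(imc (L i) + imc (R1 i)) + (imc (L' i) + imc (R2 i)) = (imc (M i) + imc (R1' i)) + (imc (M' i) + imc (R2' i))"
      by simp
    then show "imc ((L i + L' i) + (R1 i + R2 i)) = imc ((M i + M' i) + (R1' i + R2' i))" by (simp add: ac_simps)
  qed
  then show ?thesis unfolding vrel_def using R_add[OF r1(1) r2(1)] R_add[OF r1(2) r2(2)]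
    by (intro exI[of _ "\<lambda>i. R1 i + R2 i"] exI[of _ "\<lambda>i. R1' i + R2' i"]) simp
qed

lemma vrel_real: "realizable R \<Longrightarrow> vrel R (\<lambda>i. {#})"
  unfolding vrel_def using R_zero by (intro exI[of _ "\<lambda>i. {#}"] exI[of _ R]) simp

lemma vrel_cong:
  assumes "vrel L M" "\<And>i. i < n \<Longrightarrow> imc (L i) = imc (L' i)" "\<And>i. i < n \<Longrightarrow> imc (M i) = imc (M' i)"
  shows "vrel L' M'"
proof -
  obtain R R' where r: "realizable R" "realizable R'" "\<forall>i<n. imc (L i + R i) = imc (M i + R' i)"
    using assms(1) unfolding vrel_def by blast
  have "\<forall>i<n. imc (L' i + R i) = imc (M' i + R' i)" using r(3) assms(2,3) by simp
  then show ?thesis unfolding vrel_def using r by (intro exI[of _ R] exI[of _ R']) simp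
qed

lemma vrel_eq: "vrel L M \<Longrightarrow> (\<And>i. i < n \<Longrightarrow> L i = L' i) \<Longrightarrow> (\<And>i. i < n \<Longrightarrow> M i = M' i) \<Longrightarrow> vrel L' M'"
  by (rule vrel_cong[of L M]) auto

lemma vrel_edge:
  assumes "set_mset Q \<subseteq> Obj C" "k \<le> n - 2"
  shows "vrel (\<lambda>i. dl k Q i + dl (Suc k) Q i) (\<lambda>i. {#})"
proof -
  have "vrel (edge k Q) (\<lambda>i. {#})" using vrel_real R_edge[OF assms] by blast
  then show ?thesis by (rule vrel_eq) (auto simp: edge_def dl_def)
qed

lemma vrel_shift:
  assumes B: "B \<in> Obj C"
  shows "i \<le> n - 1 \<Longrightarrow> (even i \<longrightarrow> vrel (dl i {#B#}) (dl 0 {#B#})) \<and> (odd i \<longrightarrow> vrel (\<lambda>j. dl i {#B#} j + dl 0 {#B#} j) (\<lambda>j. {#}))"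
proof (induction i)
  case 0 then show ?case using vrel_refl by simp
next
  case (Suc i)
  then have i: "i \<le> n - 2" "i \<le> n - 1" by auto
  have E: "vrel (\<lambda>j. dl i {#B#} j + dl (Suc i) {#B#} j) (\<lambda>j. {#})" using vrel_edge[of "{#B#}" i] B i by simp
  show ?case
  proof (cases "even i")
    case True
    then have h: "vrel (dl i {#B#}) (dl 0 {#B#})" using Suc.IH i by simp
    have "vrel (\<lambda>j. dl 0 {#B#} j + dl (Suc i) {#B#} j) (\<lambda>j. dl i {#B#} j + dl (Suc i) {#B#} j)"
      using vrel_add[OF vrel_sym[OF h] vrel_refl] .
    from vrel_trans[OF this E] have "vrel (\<lambda>j. dl (Suc i) {#B#} j + dl 0 {#B#} j) (\<lambda>j. {#})"
      by (rule vrel_eq) (simp_all add: ac_simps)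
    then show ?thesis using True by simp
  next
    case False
    then have h: "vrel (\<lambda>j. dl i {#B#} j + dl 0 {#B#} j) (\<lambda>j. {#})" using Suc.IH i by simp
    have 1: "vrel (\<lambda>j. dl (Suc i) {#B#} j + {#}) (\<lambda>j. dl (Suc i) {#B#} j + (dl i {#B#} j + dl 0 {#B#} j))"
      using vrel_add[OF vrel_refl vrel_sym[OF h]] .
    have 2: "vrel (\<lambda>j. (dl i {#B#} j + dl (Suc i) {#B#} j) + dl 0 {#B#} j) (\<lambda>j. {#} + dl 0 {#B#} j)"
      using vrel_add[OF E vrel_refl] .
    have "vrel (\<lambda>j. dl (Suc i) {#B#} j + {#}) (\<lambda>j. {#} + dl 0 {#B#} j)"
      by (rule vrel_trans[OF 1]) (rule vrel_eq[OF 2], simp_all add: ac_simps)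
    then have "vrel (dl (Suc i) {#B#}) (dl 0 {#B#})" by (rule vrel_eq) simp_all
    then show ?thesis using False by simp
  qed
qed

lemma vrel_cancel:
  assumes "vrel (\<lambda>i. L i + K i) (\<lambda>i. M i + K i)" "vrel (\<lambda>i. K i + K' i) (\<lambda>i. {#})"
  shows "vrel L M"
proof -
  have 1: "vrel (\<lambda>i. L i + {#}) (\<lambda>i. L i + (K i + K' i))" using vrel_add[OF vrel_refl vrel_sym[OF assms(2)]] .
  have 2: "vrel (\<lambda>i. (L i + K i) + K' i) (\<lambda>i. (M i + K i) + K' i)" using vrel_add[OF assms(1) vrel_refl] .
  have 3: "vrel (\<lambda>i. M i + (K i + K' i)) (\<lambda>i. M i + {#})" using vrel_add[OF vrel_refl assms(2)] .
  have c2: "vrel (\<lambda>i. L i + (K i + K' i)) (\<lambda>i. M i + (K i + K' i))"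
  proof (rule vrel_eq[OF 2])
    fix i show "L i + K i + K' i = L i + (K i + K' i)" by (simp add: add.assoc)
  next
    fix i show "M i + K i + K' i = M i + (K i + K' i)" by (simp add: add.assoc)
  qed
  have "vrel (\<lambda>i. L i + {#}) (\<lambda>i. M i + {#})"
    using vrel_trans[OF vrel_trans[OF 1 c2] 3] .
  then show ?thesis by (rule vrel_eq) simp_all
qed

end


context nang begin

lemma dl_add: "dl k (P + Q) j = dl k P j + dl k Q j" by (simp add: dl_def)

definition cnt :: "'o multiset \<Rightarrow> 'o set \<Rightarrow> int" where
  "cnt P S = int (count (imc P) S)"

lemma gen_cnt: "gen C x = cnt {#x#}"
  unfolding gen_def cnt_def by (rule ext) auto

lemma cnt_add: "cnt (P + Q) S = cnt P S + cnt Q S" by (simp add: cnt_def)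

definition Od :: "'o list \<Rightarrow> nat \<Rightarrow> 'o multiset" where
  "Od As m = (\<Sum>i<m. if even i then {#As ! i#} else {#})"
definition Ev :: "'o list \<Rightarrow> nat \<Rightarrow> 'o multiset" where
  "Ev As m = (\<Sum>i<m. if odd i then {#As ! i#} else {#})"

lemma OdEv_obj:
  assumes "\<And>i. i < n \<Longrightarrow> As ! i \<in> Obj C"
  shows "m \<le> n \<Longrightarrow> set_mset (Od As m) \<subseteq> Obj C \<and> set_mset (Ev As m) \<subseteq> Obj C"
proof (induction m)
  case 0 then show ?case by (simp add: Od_def Ev_def)
next
  case (Suc m)
  then have "As ! m \<in> Obj C" using assms by simp
  then show ?case using Suc by (simp add: Od_def Ev_def)
qed

lemma chi_OdEv: "(\<lambda>S. \<Sum>i<m. (-1) ^ i * gen C (As ! i) S) = (\<lambda>S. cnt (Od As m) S - cnt (Ev As m) S)"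
proof (induction m)
  case 0 then show ?case by (simp add: Od_def Ev_def cnt_def)
next
  case (Suc m)
  show ?case
  proof (rule ext)
    fix S
    have "(\<Sum>i<Suc m. (-1) ^ i * gen C (As ! i) S) = cnt (Od As m) S - cnt (Ev As m) S + (-1) ^ m * cnt {#As ! m#} S"
      using fun_cong[OF Suc.IH, of S] by (simp add: gen_cnt)
    also have "\<dots> = cnt (Od As (Suc m)) S - cnt (Ev As (Suc m)) S"
      by (cases "even m") (simp_all add: Od_def Ev_def cnt_add, simp_all add: cnt_def)
    finally show "(\<Sum>i<Suc m. (-1) ^ i * gen C (As ! i) S) = cnt (Od As (Suc m)) S - cnt (Ev As (Suc m)) S" .
  qed
qed

lemma angle_vrel:
  assumes X: "(As,fs) \<in> N"
  shows "vrel (dl 0 (Od As n)) (dl 0 (Ev As n))"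
proof -
  have ao: "\<And>i. i < n \<Longrightarrow> As ! i \<in> Obj C" using N_objs(2)[OF X] .
  define V where "V m j = (\<Sum>i<m. dl i {#As ! i#} j)" for m j
  have main: "m \<le> n \<Longrightarrow> vrel (\<lambda>j. V m j + dl 0 (Ev As m) j) (dl 0 (Od As m))" for m
  proof (induction m)
    case 0 show ?case using vrel_refl[of "\<lambda>j. {#}"] by (rule vrel_eq) (simp_all add: V_def Ev_def Od_def dl_def)
  next
    case (Suc m)
    then have m: "m \<le> n - 1" "m \<le> n" by auto
    have a: "As ! m \<in> Obj C" using ao Suc.prems by simp
    note sh = vrel_shift[OF a m(1)]
    note IH = Suc.IH[OF m(2)]
    show ?case
    proof (cases "even m")
      case True
      have "vrel (\<lambda>j. (V m j + dl 0 (Ev As m) j) + dl m {#As ! m#} j) (\<lambda>j. dl 0 (Od As m) j + dl 0 {#As ! m#} j)"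
        using vrel_add[OF IH] sh True by simp
      then show ?thesis
        by (rule vrel_eq) (simp_all add: V_def Ev_def Od_def True dl_add[symmetric] ac_simps)
    next
      case False
      have sh': "vrel (\<lambda>j. dl m {#As ! m#} j + dl 0 {#As ! m#} j) (\<lambda>j. {#})" using sh False by simp
      from vrel_add[OF IH sh'] show ?thesis
        by (rule vrel_eq) (simp_all add: V_def Ev_def Od_def False dl_add[symmetric] ac_simps)
    qed
  qed
  have Vn: "\<And>j. j < n \<Longrightarrow> V n j = {#As ! j#}"
    unfolding V_def dl_def by (simp add: sum.delta')
  have rV: "realizable (V n)"
  proof (rule realizableI[OF X])
    fix i assume i: "i < n"
    show "set_mset (V n i) \<subseteq> Obj C" using Vn[OF i] ao[OF i] by simp
    show "\<exists>xs. mset xs = V n i \<and> iso_obj C (As ! i) (bsum xs)"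
      using Vn[OF i] iso_obj_sym[OF bsum_single[OF ao[OF i]]] by (intro exI[of _ "[As ! i]"]) simp
  qed
  have 1: "vrel (\<lambda>j. {#} + dl 0 (Ev As n) j) (\<lambda>j. V n j + dl 0 (Ev As n) j)"
    using vrel_add[OF vrel_sym[OF vrel_real[OF rV]] vrel_refl] .
  have "vrel (\<lambda>j. {#} + dl 0 (Ev As n) j) (dl 0 (Od As n))" using vrel_trans[OF 1 main] by simp
  then have "vrel (dl 0 (Ev As n)) (dl 0 (Od As n))" by (rule vrel_eq) simp_all
  then show ?thesis by (rule vrel_sym)
qed

end


locale nang_odd = nang + assumes odd_n: "odd n"
begin

lemma Rgen_rep:
  assumes "r \<in> Rgen C n N"
  shows "\<exists>P Q. set_mset P \<subseteq> Obj C \<and> set_mset Q \<subseteq> Obj C \<and> r = (\<lambda>S. cnt P S - cnt Q S) \<and> vrel (dl 0 P) (dl 0 Q)"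
  using assms
proof (induction rule: Rgen.induct)
  case R_zero
  show ?case using vrel_refl by (intro exI[of _ "{#}"]) (simp add: cnt_def)
next
  case (R_chi As fs)
  have ao: "\<And>i. i < n \<Longrightarrow> As ! i \<in> Obj C" using N_objs(2)[OF R_chi] .
  have o: "set_mset (Od As n) \<subseteq> Obj C \<and> set_mset (Ev As n) \<subseteq> Obj C" using OdEv_obj[OF ao] by simp
  have "chi C n As = (\<lambda>S. cnt (Od As n) S - cnt (Ev As n) S)"
    unfolding chi_def by (rule chi_OdEv)
  then show ?case using o angle_vrel[OF R_chi] by blast
next
  case (R_zobj Z)
  then show ?case using odd_n by simp
next
  case (R_add x y)
  then obtain P1 Q1 P2 Q2 where h: "set_mset P1 \<subseteq> Obj C" "set_mset Q1 \<subseteq> Obj C" "x = (\<lambda>S. cnt P1 S - cnt Q1 S)"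
     "vrel (dl 0 P1) (dl 0 Q1)" "set_mset P2 \<subseteq> Obj C" "set_mset Q2 \<subseteq> Obj C" "y = (\<lambda>S. cnt P2 S - cnt Q2 S)"
     "vrel (dl 0 P2) (dl 0 Q2)" by blast
  have v: "vrel (dl 0 (P1 + P2)) (dl 0 (Q1 + Q2))"
    using vrel_add[OF h(4) h(8)] by (rule vrel_eq) (simp_all add: dl_add)
  show ?case
    by (rule exI[of _ "P1 + P2"], rule exI[of _ "Q1 + Q2"]) (use h v in \<open>auto simp: cnt_add\<close>)
next
  case (R_neg x)
  then obtain P Q where h: "set_mset P \<subseteq> Obj C" "set_mset Q \<subseteq> Obj C" "x = (\<lambda>S. cnt P S - cnt Q S)"
     "vrel (dl 0 P) (dl 0 Q)" by blast
  show ?case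
    by (rule exI[of _ Q], rule exI[of _ P]) (use h vrel_sym in auto)
qed

end

lemma K0class_eq:
  "K0class C n N A = K0class C n N B \<longleftrightarrow> (\<lambda>S. gen C A S - gen C B S) \<in> Rgen C n N"
proof
  assume e: "K0class C n N A = K0class C n N B"
  have "\<exists>r. (\<lambda>S. gen C A S + 0) = (\<lambda>S. gen C A S + r S) \<and> r \<in> Rgen C n N"
    by (rule exI[of _ "\<lambda>S. 0"]) (simp add: Rgen.R_zero)
  then have "(\<lambda>S. gen C A S + 0) \<in> K0class C n N A" unfolding K0class_def by simp
  then have "(\<lambda>S. gen C A S + 0) \<in> K0class C n N B" using e by simp
  then obtain r where r: "r \<in> Rgen C n N" "(\<lambda>S. gen C A S + 0) = (\<lambda>S. gen C B S + r S)"
    unfolding K0class_def by auto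
  have "(\<lambda>S. gen C A S - gen C B S) = r"
  proof
    fix S show "gen C A S - gen C B S = r S" using fun_cong[OF r(2), of S] by simp
  qed
  then show "(\<lambda>S. gen C A S - gen C B S) \<in> Rgen C n N" using r(1) by simp
next
  assume d: "(\<lambda>S. gen C A S - gen C B S) \<in> Rgen C n N"
  show "K0class C n N A = K0class C n N B"
  proof
    show "K0class C n N A \<subseteq> K0class C n N B"
    proof
      fix x assume "x \<in> K0class C n N A"
      then obtain r where r: "r \<in> Rgen C n N" "x = (\<lambda>S. gen C A S + r S)" unfolding K0class_def by auto
      define r' where "r' = (\<lambda>S. (\<lambda>S. gen C A S - gen C B S) S + r S)"
      have "r' \<in> Rgen C n N" unfolding r'_def using Rgen.R_add[OF d r(1)] .
      moreover have "x = (\<lambda>S. gen C B S + r' S)" using r(2) unfolding r'_def by auto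
      ultimately have "\<exists>r. x = (\<lambda>S. gen C B S + r S) \<and> r \<in> Rgen C n N" by blast
      then show "x \<in> K0class C n N B" unfolding K0class_def by simp
    qed
    show "K0class C n N B \<subseteq> K0class C n N A"
    proof
      fix x assume "x \<in> K0class C n N B"
      then obtain r where r: "r \<in> Rgen C n N" "x = (\<lambda>S. gen C B S + r S)" unfolding K0class_def by auto
      define r' where "r' = (\<lambda>S. r S + (\<lambda>S. - (\<lambda>S. gen C A S - gen C B S) S) S)"
      have "r' \<in> Rgen C n N" unfolding r'_def using Rgen.R_add[OF r(1) Rgen.R_neg[OF d]] .
      moreover have "x = (\<lambda>S. gen C A S + r' S)" using r(2) unfolding r'_def by auto
      ultimately have "\<exists>r. x = (\<lambda>S. gen C A S + r S) \<and> r \<in> Rgen C n N" by blast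
      then show "x \<in> K0class C n N A" unfolding K0class_def by simp
    qed
  qed
qed


context nang_odd begin

lemma iso_bsum_mset:
  assumes "iso_obj C O1 (bsum xs)" "mset xs = mset ys" "set ys \<subseteq> Obj C"
  shows "iso_obj C O1 (bsum ys)"
proof -
  have "set xs = set ys" using assms(2) by (metis set_mset_mset)
  then show ?thesis using iso_obj_trans[OF assms(1) bsum_perm[of xs ys]] assms by simp
qed

lemma gen_iso: "iso_obj C x y \<Longrightarrow> gen C x = gen C y"
  unfolding gen_def using iso_class_eq iso_obj_objs by metis

lemma split_R:
  assumes X: "X \<in> Obj C" and Y: "Y \<in> Obj C" and D: "is_biprod C X Y D"
  shows "(\<lambda>S. gen C X S - gen C (fst D) S + gen C Y S) \<in> Rgen C n N"
proof -
  define V where "V i = edge 0 {#X#} i + edge 1 {#Y#} i" for i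
  have n3': "1 \<le> n - 2" using n3 by simp
  have rV: "realizable V" unfolding V_def
    using R_add[OF R_edge[of "{#X#}" 0] R_edge[of "{#Y#}" 1]] X Y n3' by simp
  obtain Os fs where O: "(Os,fs) \<in> N" and XV: "\<forall>i<n. set_mset (V i) \<subseteq> Obj C \<and> (\<exists>xs. mset xs = V i \<and> iso_obj C (Os ! i) (bsum xs))"
    using rV unfolding realizable_def by blast
  have key: "\<And>i ys. i < n \<Longrightarrow> mset ys = V i \<Longrightarrow> set ys \<subseteq> Obj C \<Longrightarrow> iso_obj C (Os ! i) (bsum ys)"
  proof -
    fix i ys assume i: "i < n" and ys: "mset ys = V i" "set ys \<subseteq> Obj C"
    obtain xs where xs: "mset xs = V i" "iso_obj C (Os ! i) (bsum xs)" using XV i by blast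
    show "iso_obj C (Os ! i) (bsum ys)" using iso_bsum_mset[OF xs(2) _ ys(2)] xs(1) ys(1) by simp
  qed
  have n0: "0 < n" "1 < n" "2 < n" using n3 by auto
  have g0: "gen C (Os ! 0) = gen C X"
    using gen_iso[OF iso_obj_trans[OF key[OF n0(1), of "[X]"] bsum_single[OF X]]] X
    unfolding V_def edge_def by simp
  have g2: "gen C (Os ! 2) = gen C Y"
    using gen_iso[OF iso_obj_trans[OF key[OF n0(3), of "[Y]"] bsum_single[OF Y]]] Y
    unfolding V_def edge_def by simp
  have bY: "bsum [Y] \<in> Obj C" using bsum_obj[of "[Y]"] Y by (simp del: bsum.simps)
  have "iso_obj C (bsum [X, Y]) (fst D)"
    using bp_iso'[OF bp_ok[OF X bY] D iso_obj_refl[OF X] bsum_single[OF Y]] by simp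
  then have g1: "gen C (Os ! 1) = gen C (fst D)"
    using gen_iso[OF iso_obj_trans[OF key[OF n0(2), of "[X, Y]"]]] X Y
    unfolding V_def edge_def by simp
  have g3: "\<And>i. 3 \<le> i \<Longrightarrow> i < n \<Longrightarrow> gen C (Os ! i) = gen C Z0"
  proof -
    fix i assume i: "3 \<le> i" "i < n"
    show "gen C (Os ! i) = gen C Z0" using gen_iso[OF key[OF i(2), of "[]"]] i
      unfolding V_def edge_def by simp
  qed
  have chiR: "chi C n Os \<in> Rgen C n N" using Rgen.R_chi[OF O] .
  have sumk: "\<And>k S. 3 + k \<le> n \<Longrightarrow> (\<Sum>i<3 + k. (-1) ^ i * gen C (Os ! i) S) =
      gen C X S - gen C (fst D) S + gen C Y S + (if even k then 0 else - gen C Z0 S)"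
  proof -
    fix k S show "3 + k \<le> n \<Longrightarrow> (\<Sum>i<3 + k. (-1) ^ i * gen C (Os ! i) S) =
      gen C X S - gen C (fst D) S + gen C Y S + (if even k then 0 else - gen C Z0 S)"
    proof (induction k)
      case 0
      have e: "{..<3::nat} = {0,1,2}" by auto
      show ?case using g0 g1 g2 by (simp add: e)
    next
      case (Suc k)
      then have h: "(\<Sum>i<3 + k. (-1) ^ i * gen C (Os ! i) S) = gen C X S - gen C (fst D) S + gen C Y S + (if even k then 0 else - gen C Z0 S)"
        by simp
      have g: "gen C (Os ! (3 + k)) = gen C Z0" using g3 Suc.prems by simp
      have "(\<Sum>i<3 + Suc k. (-1) ^ i * gen C (Os ! i) S) = (\<Sum>i<3 + k. (-1) ^ i * gen C (Os ! i) S) + (-1) ^ (3 + k) * gen C (Os ! (3 + k)) S"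
        by (simp only: add_Suc_right sum.lessThan_Suc)
      then show ?case using h g by (cases "even k") (simp_all add: power_add)
    qed
  qed
  have nk: "n = 3 + (n - 3)" "even (n - 3)" using n3 odd_n by auto
  have "chi C n Os = (\<lambda>S. gen C X S - gen C (fst D) S + gen C Y S)"
  proof
    fix S
    have "chi C n Os S = (\<Sum>i<3 + (n - 3). (-1) ^ i * gen C (Os ! i) S)" unfolding chi_def using nk(1) by simp
    also have "\<dots> = gen C X S - gen C (fst D) S + gen C Y S" using sumk[of "n - 3" S] nk by simp
    finally show "chi C n Os S = gen C X S - gen C (fst D) S + gen C Y S" .
  qed
  then show ?thesis using chiR by simp
qed

lemma chi_cons: "chi C n (x # Cs) S = gen C x S + (\<Sum>i<n - 1. (-1) ^ Suc i * gen C (Cs ! i) S)"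
proof -
  have "n = Suc (n - 1)" using n3 by simp
  then have "chi C n (x # Cs) S = (\<Sum>i<Suc (n - 1). (-1) ^ i * gen C ((x # Cs) ! i) S)" unfolding chi_def by simp
  also have "\<dots> = gen C x S + (\<Sum>i<n - 1. (-1) ^ Suc i * gen C (Cs ! i) S)"
    by (subst sum.lessThan_Suc_shift) simp
  finally show ?thesis .
qed

lemma dir2:
  assumes A: "A \<in> Obj C" and B: "B \<in> Obj C" and C1: "C1 \<in> Obj C"
    and D: "is_biprod C A C1 D" and E: "is_biprod C B C1 E"
    and XD: "(fst D # Cs, fs) \<in> N" and XE: "(fst E # Cs, gs) \<in> N"
  shows "(\<lambda>S. gen C A S - gen C B S) \<in> Rgen C n N"
proof -
  note s1 = split_R[OF A C1 D] and s2 = split_R[OF B C1 E]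
  note t1 = Rgen.R_chi[OF XD] and t2 = Rgen.R_chi[OF XE]
  have "(\<lambda>S. (\<lambda>S. (\<lambda>S. gen C A S - gen C (fst D) S + gen C C1 S) S + (\<lambda>S. - (\<lambda>S. gen C B S - gen C (fst E) S + gen C C1 S) S) S) S
      + (\<lambda>S. chi C n (fst D # Cs) S + (\<lambda>S. - chi C n (fst E # Cs) S) S) S) \<in> Rgen C n N"
    by (intro Rgen.R_add Rgen.R_neg s1 s2 t1 t2)
  moreover have "(\<lambda>S. (\<lambda>S. (\<lambda>S. gen C A S - gen C (fst D) S + gen C C1 S) S + (\<lambda>S. - (\<lambda>S. gen C B S - gen C (fst E) S + gen C C1 S) S) S) S
      + (\<lambda>S. chi C n (fst D # Cs) S + (\<lambda>S. - chi C n (fst E # Cs) S) S) S) = (\<lambda>S. gen C A S - gen C B S)"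
    by (rule ext) (simp add: chi_cons)
  ultimately show ?thesis by simp
qed

end


context nang_odd begin

lemma dir1:
  assumes A: "A \<in> Obj C" and B: "B \<in> Obj C" and d: "(\<lambda>S. gen C A S - gen C B S) \<in> Rgen C n N"
  shows "\<exists>C1 Cs D E fs gs. C1 \<in> Obj C \<and> length Cs = n - 1 \<and> set Cs \<subseteq> Obj C \<and>
       is_biprod C A C1 D \<and> is_biprod C B C1 E \<and>
       (fst D # Cs, fs) \<in> N \<and> (fst E # Cs, gs) \<in> N"
proof -
  obtain P Q where PQ: "set_mset P \<subseteq> Obj C" "set_mset Q \<subseteq> Obj C"
    "(\<lambda>S. gen C A S - gen C B S) = (\<lambda>S. cnt P S - cnt Q S)" "vrel (dl 0 P) (dl 0 Q)"
    using Rgen_rep[OF d] by blast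
  have mq: "imc ({#A#} + Q) = imc ({#B#} + P)"
  proof (rule multiset_eqI)
    fix S
    have "gen C A S - gen C B S = cnt P S - cnt Q S" using fun_cong[OF PQ(3), of S] by simp
    then have "cnt {#A#} S + cnt Q S = cnt {#B#} S + cnt P S" by (simp add: gen_cnt)
    then have "cnt ({#A#} + Q) S = cnt ({#B#} + P) S" by (simp only: cnt_add)
    then show "count (imc ({#A#} + Q)) S = count (imc ({#B#} + P)) S" unfolding cnt_def by simp
  qed
  have v1: "vrel (\<lambda>i. dl 0 {#B#} i + dl 0 P i) (\<lambda>i. dl 0 {#B#} i + dl 0 Q i)"
    using vrel_add[OF vrel_refl PQ(4)] .
  have v2: "vrel (\<lambda>i. dl 0 {#A#} i + dl 0 Q i) (\<lambda>i. dl 0 {#B#} i + dl 0 Q i)"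
  proof (rule vrel_cong[OF v1])
    fix i show "imc (dl 0 {#B#} i + dl 0 P i) = imc (dl 0 {#A#} i + dl 0 Q i)"
    proof (cases "i = 0")
      case True
      then show ?thesis unfolding dl_def using mq[symmetric] by (simp only: if_True simp_thms)
    next
      case False
      then show ?thesis unfolding dl_def by simp
    qed
  qed simp
  have ed: "vrel (\<lambda>i. dl 0 Q i + dl (Suc 0) Q i) (\<lambda>i. {#})" using vrel_edge[OF PQ(2), of 0] by simp
  have vAB: "vrel (dl 0 {#A#}) (dl 0 {#B#})" using vrel_cancel[OF v2 ed] .
  obtain R R' where RR: "realizable R" "realizable R'" "\<forall>i<n. imc (dl 0 {#A#} i + R i) = imc (dl 0 {#B#} i + R' i)"
    using vAB unfolding vrel_def by blast
  have n0: "0 < n" using n3 by simp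
  have "imc (dl 0 {#A#} 0 + R 0) = imc (dl 0 {#B#} 0 + R' 0)" using RR(3) n0 by blast
  then have h0: "imc ({#A#} + R 0) = imc ({#B#} + R' 0)" by (simp add: dl_def)
  have hi: "imc (R i) = imc (R' i)" if i: "0 < i" "i < n" for i
  proof -
    have "imc (dl 0 {#A#} i + R i) = imc (dl 0 {#B#} i + R' i)" using RR(3) i by blast
    then show ?thesis using i by (simp add: dl_def)
  qed
  define T where "T = edge 0 {#A, B#}"
  have rT: "realizable T" unfolding T_def using R_edge[of "{#A, B#}" 0] A B by simp
  obtain Os fs where X: "(Os,fs) \<in> N" and XL: "\<forall>i<n. set_mset (R' i + T i) \<subseteq> Obj C \<and> (\<exists>xs. mset xs = R' i + T i \<and> iso_obj C (Os ! i) (bsum xs))"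
    using R_add[OF RR(2) rT] unfolding realizable_def by blast
  obtain Os' gs where Y: "(Os',gs) \<in> N" and YM: "\<forall>i<n. set_mset (R i + T i) \<subseteq> Obj C \<and> (\<exists>xs. mset xs = R i + T i \<and> iso_obj C (Os' ! i) (bsum xs))"
    using R_add[OF RR(1) rT] unfolding realizable_def by blast
  have R'0: "set_mset (R' 0) \<subseteq> Obj C" using R_obj[OF RR(2) n0] .
  obtain w where w: "mset w = R' 0 + {#B#}" using ex_mset by blast
  have sw: "set w \<subseteq> Obj C"
  proof -
    have "set w = set_mset (R' 0 + {#B#})" using w by (metis set_mset_mset)
    then show ?thesis using R'0 B by auto
  qed
  define C1 where "C1 = bsum w"
  have C1: "C1 \<in> Obj C" unfolding C1_def using bsum_obj[OF sw] .
  define D where "D = bp A C1"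
  define E where "E = bp B C1"
  have Db: "is_biprod C A C1 D" unfolding D_def using bp_ok[OF A C1] .
  have Eb: "is_biprod C B C1 E" unfolding E_def using bp_ok[OF B C1] .
  have lenO: "length Os = n" "length Os' = n" using N_objs(1)[OF X] N_objs(1)[OF Y] by auto
  have nthP: "\<And>x i. 0 < i \<Longrightarrow> i < n \<Longrightarrow> (x # tl Os) ! i = Os ! i"
    using lenO by (auto simp: nth_tl)
  have T0: "T 0 = {#A, B#}" unfolding T_def edge_def by simp
  have Ti: "\<And>i. 0 < i \<Longrightarrow> T i = edge 0 {#A, B#} i" unfolding T_def by simp
  have "\<exists>fs'. (fst D # tl Os, fs') \<in> N"
  proof (rule transport[OF X])
    show "length (fst D # tl Os) = n" using lenO n0 by simp
    show "\<forall>i<n. iso_obj C (Os ! i) ((fst D # tl Os) ! i)"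
    proof (intro allI impI)
      fix i assume i: "i < n"
      show "iso_obj C (Os ! i) ((fst D # tl Os) ! i)"
      proof (cases "i = 0")
        case True
        obtain xs where xs: "mset xs = R' 0 + T 0" "iso_obj C (Os ! 0) (bsum xs)" using XL n0 by blast
        have "mset xs = mset (A # w)"
        proof -
          have "mset (A # w) = add_mset A (R' 0 + {#B#})" using w by (simp only: mset.simps)
          moreover have "mset xs = R' 0 + {#A, B#}" using xs(1) T0 by (simp only:)
          ultimately show ?thesis by (simp only: union_mset_add_mset_right)
        qed
        then have "iso_obj C (Os ! 0) (bsum (A # w))" by (rule iso_bsum_mset[OF xs(2)]) (use sw A in simp)
        then show ?thesis using True unfolding D_def C1_def by simp
      next
        case False
        then have "(fst D # tl Os) ! i = Os ! i" using nthP[of i] i by simp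
        then show ?thesis using iso_obj_refl[OF N_objs(2)[OF X i]] by simp
      qed
    qed
  qed
  then obtain fs' where X': "(fst D # tl Os, fs') \<in> N" by blast
  have "\<exists>gs'. (fst E # tl Os, gs') \<in> N"
  proof (rule transport[OF Y])
    show "length (fst E # tl Os) = n" using lenO n0 by simp
    show "\<forall>i<n. iso_obj C (Os' ! i) ((fst E # tl Os) ! i)"
    proof (intro allI impI)
      fix i assume i: "i < n"
      show "iso_obj C (Os' ! i) ((fst E # tl Os) ! i)"
      proof (cases "i = 0")
        case True
        obtain ys where ys: "mset ys = R 0 + T 0" "iso_obj C (Os' ! 0) (bsum ys)" using YM n0 by blast
        have sy: "set ys \<subseteq> Obj C"
        proof -
          have "set ys = set_mset (R 0 + T 0)" using ys(1) by (metis set_mset_mset)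
          then show ?thesis using YM n0 by auto
        qed
        have "imc (mset ys) = imc ({#A#} + R 0) + {#iso_class C B#}" using ys(1) T0 by (simp add: ac_simps)
        also have "\<dots> = imc ({#B#} + R' 0) + {#iso_class C B#}" using h0 by simp
        also have "\<dots> = imc (mset (B # w))" using w by (simp add: ac_simps)
        finally have "iso_obj C (bsum ys) (bsum (B # w))" by (rule bsum_perm) (use sy sw B in simp_all)
        then have "iso_obj C (Os' ! 0) (bsum (B # w))" using iso_obj_trans[OF ys(2)] by blast
        then show ?thesis using True unfolding E_def C1_def by simp
      next
        case False
        then have i0: "0 < i" by simp
        obtain ys where ys: "mset ys = R i + T i" "iso_obj C (Os' ! i) (bsum ys)" using YM i by blast
        obtain xs where xs: "mset xs = R' i + T i" "iso_obj C (Os ! i) (bsum xs)" using XL i by blast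
        have sy: "set ys \<subseteq> Obj C"
        proof -
          have "set ys = set_mset (R i + T i)" using ys(1) by (metis set_mset_mset)
          then show ?thesis using YM i by auto
        qed
        have sx: "set xs \<subseteq> Obj C"
        proof -
          have "set xs = set_mset (R' i + T i)" using xs(1) by (metis set_mset_mset)
          then show ?thesis using XL i by auto
        qed
        have "imc (mset ys) = imc (mset xs)" using ys(1) xs(1) hi[OF i0 i] by simp
        then have "iso_obj C (bsum ys) (bsum xs)" by (rule bsum_perm) (use sy sx in simp_all)
        then have "iso_obj C (Os' ! i) (Os ! i)" using iso_obj_trans[OF iso_obj_trans[OF ys(2)] iso_obj_sym[OF xs(2)]] by blast
        then show ?thesis using nthP[OF i0 i] by simp
      qed
    qed
  qed
  then obtain gs' where Y': "(fst E # tl Os, gs') \<in> N" by blast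
  have lt: "length (tl Os) = n - 1" using lenO by simp
  have st: "set (tl Os) \<subseteq> Obj C"
  proof
    fix x assume "x \<in> set (tl Os)"
    then obtain j where j: "j < length (tl Os)" "x = tl Os ! j" by (metis in_set_conv_nth)
    then have "x = Os ! Suc j" "Suc j < n" using lenO by (auto simp: nth_tl)
    then show "x \<in> Obj C" using N_objs(2)[OF X] by simp
  qed
  show ?thesis
    by (intro exI[of _ C1] exI[of _ "tl Os"] exI[of _ D] exI[of _ E] exI[of _ fs'] exI[of _ gs'] conjI C1 lt st Db Eb X' Y')
qed

end

theorem corollary2p4:
  fixes C :: "('o,'m) addcat" and SO :: "'o \<Rightarrow> 'o" and SM :: "'m \<Rightarrow> 'm"
    and n :: nat and N :: "('o list \<times> 'm list) set" and A B :: 'o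
  assumes "3 \<le> n" and "odd n" and "n_angulated C SO SM n N"
    and "A \<in> Obj C" and "B \<in> Obj C"
  shows "K0class C n N A = K0class C n N B \<longleftrightarrow>
    (\<exists>C1 Cs D E fs gs. C1 \<in> Obj C \<and> length Cs = n - 1 \<and> set Cs \<subseteq> Obj C \<and>
       is_biprod C A C1 D \<and> is_biprod C B C1 E \<and>
       (fst D # Cs, fs) \<in> N \<and> (fst E # Cs, gs) \<in> N)"
proof -
  have ac: "additive_category C" using assms(3) unfolding n_angulated_def by (elim conjE)
  have I: "nang_odd C SO SM n N"
    unfolding nang_odd_def nang_def acat_def nang_axioms_def nang_odd_axioms_def
    using ac assms(2,3) by simp
  interpret nang_odd C SO SM n N by (rule I)
  show ?thesis
  proof
    assume "K0class C n N A = K0class C n N B"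
    then have "(\<lambda>S. gen C A S - gen C B S) \<in> Rgen C n N" by (rule K0class_eq[THEN iffD1])
    then show "\<exists>C1 Cs D E fs gs. C1 \<in> Obj C \<and> length Cs = n - 1 \<and> set Cs \<subseteq> Obj C \<and>
       is_biprod C A C1 D \<and> is_biprod C B C1 E \<and> (fst D # Cs, fs) \<in> N \<and> (fst E # Cs, gs) \<in> N"
      by (rule dir1[OF assms(4,5)])
  next
    assume "\<exists>C1 Cs D E fs gs. C1 \<in> Obj C \<and> length Cs = n - 1 \<and> set Cs \<subseteq> Obj C \<and>
       is_biprod C A C1 D \<and> is_biprod C B C1 E \<and> (fst D # Cs, fs) \<in> N \<and> (fst E # Cs, gs) \<in> N"
    then obtain C1 Cs D E fs gs where h: "C1 \<in> Obj C \<and> length Cs = n - 1 \<and> set Cs \<subseteq> Obj C \<and>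
       is_biprod C A C1 D \<and> is_biprod C B C1 E \<and> (fst D # Cs, fs) \<in> N \<and> (fst E # Cs, gs) \<in> N"
      by (elim exE)
    have h1: "C1 \<in> Obj C" and h2: "is_biprod C A C1 D" and h3: "is_biprod C B C1 E"
      and h4: "(fst D # Cs, fs) \<in> N" and h5: "(fst E # Cs, gs) \<in> N" using h by simp_all
    have "(\<lambda>S. gen C A S - gen C B S) \<in> Rgen C n N" by (rule dir2[OF assms(4,5) h1 h2 h3 h4 h5])
    then show "K0class C n N A = K0class C n N B" by (rule K0class_eq[THEN iffD2])
  qed
qed


end
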